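(* Let $(\mathcal{A},\tau)$ be a tracial $W^*$-probability space, $X$ a topological space, and $u_1,u_2:X\to\mathcal{A}$ functions continuous with respect to the operator norm on $\mathcal{A}$, such that for every $x\in X$: $u_1(x)$ and $u_2(x)$ are $*$-free, $\tau(u_1(x))=\tau(u_2(x))=0$, and $1_{\mathcal{A}}-u_1(x)u_2(x)$ is invertible in $\mathcal{A}$. Then the set \[Y=\{x\in X:\|u_1(x)\|_2\|u_2(x)\|_2<1\}\] is both open and closed in $X$. In particular, if $X$ is connected, then either $Y=X$ or $Y=\varnothing$.
   Context: A tracial $W^*$-probability space is a von Neumann algebra $\mathcal{A}$ with a faithful normal trace $\tau$ satisfying $\tau(1_{\mathcal{A}})=1$. $\|a\|_2=\tau(a^*a)^{1/2}$. Elements $a,b$ are $*$-free if the unital $*$-algebras they generate are freely independent with respect to $\tau$. *)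

theory Defs
  imports "HOL-Analysis.Analysis"
begin

text \<open>Concrete model: every Hilbert space is unitarily equivalent to some l2(I);
  we take H = l2 over an arbitrary index type 'i. Vectors are functions 'i => complex,
  operators are maps on such functions which are linear and bounded on l2 and
  send everything outside l2 to 0 (canonical representatives).\<close>

type_synonym 'i vec = "'i \<Rightarrow> complex"
type_synonym 'i op = "'i vec \<Rightarrow> 'i vec"

definition l2 :: "'i vec set" where
  "l2 = {f. (\<lambda>i. (cmod (f i))^2) summable_on UNIV}"

definition l2_inner :: "'i vec \<Rightarrow> 'i vec \<Rightarrow> complex" where
  "l2_inner f g = infsum (\<lambda>i. cnj (f i) * g i) UNIV"

definition l2_norm :: "'i vec \<Rightarrow> real" where
  "l2_norm f = sqrt (infsum (\<lambda>i. (cmod (f i))^2) UNIV)"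

definition is_bdd_op :: "'i op \<Rightarrow> bool" where
  "is_bdd_op T \<longleftrightarrow>
     (\<forall>x\<in>l2. T x \<in> l2) \<and>
     (\<forall>x\<in>l2. \<forall>y\<in>l2. \<forall>a b. T (\<lambda>i. a * x i + b * y i) = (\<lambda>i. a * T x i + b * T y i)) \<and>
     (\<exists>K. \<forall>x\<in>l2. l2_norm (T x) \<le> K * l2_norm x) \<and>
     (\<forall>x. x \<notin> l2 \<longrightarrow> T x = (\<lambda>i. 0))"

definition op_norm :: "'i op \<Rightarrow> real" where
  "op_norm T = Sup {l2_norm (T x) | x. x \<in> l2 \<and> l2_norm x \<le> 1}"

definition op_id :: "'i op" where
  "op_id = (\<lambda>x. if x \<in> l2 then x else (\<lambda>i. 0))"

definition op_zero :: "'i op" where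
  "op_zero = (\<lambda>x i. 0)"

definition op_add :: "'i op \<Rightarrow> 'i op \<Rightarrow> 'i op" where
  "op_add S T = (\<lambda>x i. S x i + T x i)"

definition op_sub :: "'i op \<Rightarrow> 'i op \<Rightarrow> 'i op" where
  "op_sub S T = (\<lambda>x i. S x i - T x i)"

definition op_scale :: "complex \<Rightarrow> 'i op \<Rightarrow> 'i op" where
  "op_scale c T = (\<lambda>x i. c * T x i)"

text \<open>Algebra product is composition (S \<circ> T).\<close>

definition is_adjoint :: "'i op \<Rightarrow> 'i op \<Rightarrow> bool" where
  "is_adjoint T S \<longleftrightarrow> is_bdd_op S \<and>
     (\<forall>x\<in>l2. \<forall>y\<in>l2. l2_inner (T x) y = l2_inner x (S y))"

definition adj :: "'i op \<Rightarrow> 'i op" where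
  "adj T = (THE S. is_adjoint T S)"

definition commutant :: "'i op set \<Rightarrow> 'i op set" where
  "commutant S = {T. is_bdd_op T \<and> (\<forall>s\<in>S. T \<circ> s = s \<circ> T)}"

definition von_neumann_algebra :: "'i op set \<Rightarrow> bool" where
  "von_neumann_algebra A \<longleftrightarrow>
     (\<forall>a\<in>A. is_bdd_op a) \<and> (\<forall>a\<in>A. adj a \<in> A) \<and> commutant (commutant A) = A"

definition nonneg_complex :: "complex \<Rightarrow> bool" where
  "nonneg_complex z \<longleftrightarrow> Im z = 0 \<and> Re z \<ge> 0"

definition op_pos :: "'i op \<Rightarrow> bool" where
  "op_pos T \<longleftrightarrow> (\<forall>x\<in>l2. nonneg_complex (l2_inner x (T x)))"

definition op_le :: "'i op \<Rightarrow> 'i op \<Rightarrow> bool" where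
  "op_le S T \<longleftrightarrow> op_pos (op_sub T S)"

definition self_adjoint :: "'i op \<Rightarrow> bool" where
  "self_adjoint T \<longleftrightarrow> is_bdd_op T \<and> adj T = T"

definition normal_functional :: "'i op set \<Rightarrow> ('i op \<Rightarrow> complex) \<Rightarrow> bool" where
  "normal_functional A \<tau> \<longleftrightarrow>
     (\<forall>D s. D \<subseteq> A \<and> D \<noteq> {} \<and> (\<forall>d\<in>D. self_adjoint d \<and> op_pos d) \<and>
        (\<forall>d1\<in>D. \<forall>d2\<in>D. \<exists>d3\<in>D. op_le d1 d3 \<and> op_le d2 d3) \<and>
        s \<in> A \<and> self_adjoint s \<and> (\<forall>d\<in>D. op_le d s) \<and>
        (\<forall>t. self_adjoint t \<and> (\<forall>d\<in>D. op_le d t) \<longrightarrow> op_le s t)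
      \<longrightarrow> Re (\<tau> s) = Sup ((\<lambda>d. Re (\<tau> d)) ` D))"

definition tracial_W_prob_space :: "'i op set \<Rightarrow> ('i op \<Rightarrow> complex) \<Rightarrow> bool" where
  "tracial_W_prob_space A \<tau> \<longleftrightarrow>
     von_neumann_algebra A \<and>
     (\<forall>a\<in>A. \<forall>b\<in>A. \<forall>c d. \<tau> (op_add (op_scale c a) (op_scale d b)) = c * \<tau> a + d * \<tau> b) \<and>
     (\<forall>a\<in>A. nonneg_complex (\<tau> (adj a \<circ> a))) \<and>
     (\<forall>a\<in>A. \<tau> (adj a \<circ> a) = 0 \<longrightarrow> a = op_zero) \<and>
     (\<forall>a\<in>A. \<forall>b\<in>A. \<tau> (a \<circ> b) = \<tau> (b \<circ> a)) \<and>
     \<tau> op_id = 1 \<and>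
     normal_functional A \<tau>"

definition norm2 :: "('i op \<Rightarrow> complex) \<Rightarrow> 'i op \<Rightarrow> real" where
  "norm2 \<tau> a = sqrt (Re (\<tau> (adj a \<circ> a)))"

definition invertible_in :: "'i op set \<Rightarrow> 'i op \<Rightarrow> bool" where
  "invertible_in A a \<longleftrightarrow> (\<exists>b\<in>A. a \<circ> b = op_id \<and> b \<circ> a = op_id)"

inductive_set star_alg :: "'i op \<Rightarrow> 'i op set" for a :: "'i op" where
  sa_one: "op_id \<in> star_alg a"
| sa_gen: "a \<in> star_alg a"
| sa_adj: "adj a \<in> star_alg a"
| sa_add: "x \<in> star_alg a \<Longrightarrow> y \<in> star_alg a \<Longrightarrow> op_add x y \<in> star_alg a"
| sa_mult: "x \<in> star_alg a \<Longrightarrow> y \<in> star_alg a \<Longrightarrow> x \<circ> y \<in> star_alg a"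
| sa_scale: "x \<in> star_alg a \<Longrightarrow> op_scale c x \<in> star_alg a"

definition op_prod :: "'i op list \<Rightarrow> 'i op" where
  "op_prod xs = foldr (\<circ>) xs op_id"

definition star_free :: "('i op \<Rightarrow> complex) \<Rightarrow> 'i op \<Rightarrow> 'i op \<Rightarrow> bool" where
  "star_free \<tau> a b \<longleftrightarrow>
     (\<forall>xs ks. xs \<noteq> [] \<and> length ks = length xs \<and>
        (\<forall>j<length xs. xs ! j \<in> (if ks ! j then star_alg a else star_alg b) \<and> \<tau> (xs ! j) = 0) \<and>
        (\<forall>j. Suc j < length xs \<longrightarrow> ks ! j \<noteq> ks ! Suc j)
      \<longrightarrow> \<tau> (op_prod xs) = 0)"

definition op_norm_continuous :: "('x::topological_space \<Rightarrow> 'i op) \<Rightarrow> bool" where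
  "op_norm_continuous u \<longleftrightarrow>
     (\<forall>x0. \<forall>e>0. \<forall>\<^sub>F x in nhds x0. op_norm (op_sub (u x) (u x0)) < e)"

end

theory Submission
  imports Defs
begin


lemma l2_iff: "x \<in> l2 \<longleftrightarrow> (\<lambda>i. (cmod (x i))^2) summable_on UNIV"
  by (simp add: l2_def)

lemma l2_zero[simp]: "(\<lambda>i. 0) \<in> l2"
  by (simp add: l2_def)

lemma l2_lin:
  assumes "x \<in> l2" "y \<in> l2"
  shows "(\<lambda>i. a * x i + b * y i) \<in> l2"
proof -
  have sx: "(\<lambda>i. (cmod (x i))^2) summable_on UNIV" and sy: "(\<lambda>i. (cmod (y i))^2) summable_on UNIV"
    using assms by (auto simp: l2_def)
  have s: "(\<lambda>i. 2 * (cmod a)^2 * (cmod (x i))^2 + 2 * (cmod b)^2 * (cmod (y i))^2) summable_on UNIV"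
    using summable_on_add[OF summable_on_cmult_right[OF sx, of "2 * (cmod a)^2"] summable_on_cmult_right[OF sy, of "2 * (cmod b)^2"]]
    by (simp add: mult.assoc)
  have le: "(cmod (a * x i + b * y i))^2 \<le> 2 * (cmod a)^2 * (cmod (x i))^2 + 2 * (cmod b)^2 * (cmod (y i))^2" for i
  proof -
    have "cmod (a * x i + b * y i) \<le> cmod a * cmod (x i) + cmod b * cmod (y i)"
      by (metis norm_mult norm_triangle_ineq)
    hence "(cmod (a * x i + b * y i))^2 \<le> (cmod a * cmod (x i) + cmod b * cmod (y i))^2"
      by (simp add: power_mono)
    also have "\<dots> \<le> 2 * (cmod a * cmod (x i))^2 + 2 * (cmod b * cmod (y i))^2"
    proof -
      have "0 \<le> (cmod a * cmod (x i) - cmod b * cmod (y i))^2" by simp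
      thus ?thesis by (simp add: power2_eq_square algebra_simps)
    qed
    finally show ?thesis by (simp add: power_mult_distrib)
  qed
  show ?thesis unfolding l2_def mem_Collect_eq
    by (rule summable_on_comparison_test[OF s]) (auto intro: le)
qed

lemma l2_add: "x \<in> l2 \<Longrightarrow> y \<in> l2 \<Longrightarrow> (\<lambda>i. x i + y i) \<in> l2"
  using l2_lin[of x y 1 1] by simp

lemma l2_scale: "x \<in> l2 \<Longrightarrow> (\<lambda>i. a * x i) \<in> l2"
  using l2_lin[of x x a 0] by simp

lemma l2_sub: "x \<in> l2 \<Longrightarrow> y \<in> l2 \<Longrightarrow> (\<lambda>i. x i - y i) \<in> l2"
  using l2_lin[of x y 1 "-1"] by simp

lemma l2_abs_inner:
  assumes "x \<in> l2" "y \<in> l2"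
  shows "(\<lambda>i. norm (cnj (x i) * y i)) summable_on UNIV"
proof -
  have sx: "(\<lambda>i. (cmod (x i))^2) summable_on UNIV" and sy: "(\<lambda>i. (cmod (y i))^2) summable_on UNIV"
    using assms by (auto simp: l2_def)
  have s: "(\<lambda>i. (cmod (x i))^2 + (cmod (y i))^2) summable_on UNIV"
    using summable_on_add[OF sx sy] by simp
  have le: "norm (cnj (x i) * y i) \<le> (cmod (x i))^2 + (cmod (y i))^2" for i
  proof -
    have "norm (cnj (x i) * y i) = cmod (x i) * cmod (y i)" by (simp add: norm_mult)
    also have "\<dots> \<le> (cmod (x i))^2 + (cmod (y i))^2"
    proof -
      have "0 \<le> (cmod (x i) - cmod (y i))^2" by simp
      hence A: "2 * (cmod (x i) * cmod (y i)) \<le> (cmod (x i))^2 + (cmod (y i))^2"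
        by (simp add: power2_eq_square algebra_simps)
      have B: "0 \<le> cmod (x i) * cmod (y i)" by simp
      from A B show ?thesis by linarith
    qed
    finally show ?thesis .
  qed
  show ?thesis
    by (rule summable_on_comparison_test[OF s]) (auto intro: le)
qed

lemma l2_inner_summable: "x \<in> l2 \<Longrightarrow> y \<in> l2 \<Longrightarrow> (\<lambda>i. cnj (x i) * y i) summable_on UNIV"
  by (rule abs_summable_summable[OF l2_abs_inner])

lemma inner_lin2:
  assumes "x \<in> l2" "y \<in> l2" "z \<in> l2"
  shows "l2_inner x (\<lambda>i. a * y i + b * z i) = a * l2_inner x y + b * l2_inner x z"
proof -
  have "l2_inner x (\<lambda>i. a * y i + b * z i) = infsum (\<lambda>i. a * (cnj (x i) * y i) + b * (cnj (x i) * z i)) UNIV"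
    unfolding l2_inner_def by (rule infsum_cong) (simp add: algebra_simps)
  also have "\<dots> = infsum (\<lambda>i. a * (cnj (x i) * y i)) UNIV + infsum (\<lambda>i. b * (cnj (x i) * z i)) UNIV"
    by (rule infsum_add) (auto intro!: summable_on_cmult_right l2_inner_summable assms)
  also have "\<dots> = a * l2_inner x y + b * l2_inner x z"
    unfolding l2_inner_def by (simp add: infsum_cmult_right')
  finally show ?thesis .
qed

lemma inner_cnj: "l2_inner y x = cnj (l2_inner x y)"
proof -
  have "cnj (l2_inner x y) = infsum (\<lambda>i. cnj (cnj (x i) * y i)) UNIV"
    unfolding l2_inner_def by (rule infsum_cnj[symmetric])
  also have "\<dots> = l2_inner y x" unfolding l2_inner_def by (simp add: mult.commute)
  finally show ?thesis by simp
qed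

lemma inner_lin1:
  assumes "x \<in> l2" "y \<in> l2" "z \<in> l2"
  shows "l2_inner (\<lambda>i. a * y i + b * z i) x = cnj a * l2_inner y x + cnj b * l2_inner z x"
  using inner_lin2[OF assms, of a b] by (simp add: inner_cnj[of _ x])

lemma inner_zero2[simp]: "l2_inner x (\<lambda>i. 0) = 0"
  by (simp add: l2_inner_def)

lemma inner_zero1[simp]: "l2_inner (\<lambda>i. 0) x = 0"
  by (simp add: l2_inner_def)

lemma norm_sq_sum: "x \<in> l2 \<Longrightarrow> (l2_norm x)^2 = infsum (\<lambda>i. (cmod (x i))^2) UNIV"
proof -
  have "0 \<le> infsum (\<lambda>i. (cmod (x i))^2) UNIV" by (rule infsum_nonneg) simp
  thus ?thesis unfolding l2_norm_def by simp
qed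

lemma l2_norm_nonneg: "l2_norm x \<ge> 0"
proof -
  have "0 \<le> infsum (\<lambda>i. (cmod (x i))^2) UNIV" by (rule infsum_nonneg) simp
  thus ?thesis unfolding l2_norm_def by simp
qed

lemma inner_self: "x \<in> l2 \<Longrightarrow> l2_inner x x = of_real ((l2_norm x)^2)"
proof -
  assume x: "x \<in> l2"
  have "((\<lambda>i. (cmod (x i))^2) has_sum (infsum (\<lambda>i. (cmod (x i))^2) UNIV)) UNIV"
    using x by (simp add: l2_def)
  hence "((\<lambda>i. complex_of_real ((cmod (x i))^2)) has_sum of_real (infsum (\<lambda>i. (cmod (x i))^2) UNIV)) UNIV"
    by (rule has_sum_of_real)
  moreover have "(\<lambda>i. complex_of_real ((cmod (x i))^2)) = (\<lambda>i. cnj (x i) * x i)"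
  proof (rule ext)
    fix i show "complex_of_real ((cmod (x i))^2) = cnj (x i) * x i"
      using complex_norm_square[of "x i"] by (simp only: mult.commute)
  qed
  ultimately show ?thesis
    using norm_sq_sum[OF x] by (simp add: l2_inner_def infsumI)
qed

lemma l2_norm_zero: assumes "x \<in> l2" "l2_norm x = 0" shows "x = (\<lambda>i. 0)"
proof
  fix i
  have "infsum (\<lambda>i. (cmod (x i))^2) UNIV \<le> 0" using norm_sq_sum[OF assms(1)] assms(2) by simp
  hence "(cmod (x i))^2 = 0"
    by (rule nonneg_infsum_le_0D) (use assms(1) in \<open>auto simp: l2_def\<close>)
  thus "x i = 0" by simp
qed

lemma l2_norm_scale: "l2_norm (\<lambda>i. c * x i) = cmod c * l2_norm x"
proof -
  have "infsum (\<lambda>i. (cmod (c * x i))^2) UNIV = (cmod c)^2 * infsum (\<lambda>i. (cmod (x i))^2) UNIV"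
    by (simp add: norm_mult power_mult_distrib infsum_cmult_right')
  thus ?thesis unfolding l2_norm_def by (simp add: real_sqrt_mult)
qed

lemma cauchy_schwarz:
  assumes "x \<in> l2" "y \<in> l2"
  shows "cmod (l2_inner x y) \<le> l2_norm x * l2_norm y"
proof (cases "l2_norm x = 0 \<or> l2_norm y = 0")
  case True
  hence "x = (\<lambda>i. 0) \<or> y = (\<lambda>i. 0)" using l2_norm_zero assms by blast
  hence "l2_inner x y = 0" by auto
  thus ?thesis using l2_norm_nonneg[of x] l2_norm_nonneg[of y] by simp
next
  case False
  define p where "p = l2_norm x"
  define q where "q = l2_norm y"
  have p: "p > 0" and q: "q > 0" using False l2_norm_nonneg p_def q_def
    by (metis less_eq_real_def)+
  have sx: "(\<lambda>i. (cmod (x i))^2) summable_on UNIV" and sy: "(\<lambda>i. (cmod (y i))^2) summable_on UNIV"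
    using assms by (auto simp: l2_def)
  have "cmod (l2_inner x y) \<le> infsum (\<lambda>i. norm (cnj (x i) * y i)) UNIV"
    unfolding l2_inner_def
    by (rule norm_infsum_le[OF has_sum_infsum has_sum_infsum])
       (auto intro: l2_inner_summable assms l2_abs_inner)
  also have "\<dots> \<le> infsum (\<lambda>i. (q / p) / 2 * (cmod (x i))^2 + (p / q) / 2 * (cmod (y i))^2) UNIV"
  proof (rule infsum_mono)
    show "(\<lambda>i. norm (cnj (x i) * y i)) summable_on UNIV" using l2_abs_inner[OF assms] by simp
    show "(\<lambda>i. (q / p) / 2 * (cmod (x i))^2 + (p / q) / 2 * (cmod (y i))^2) summable_on UNIV"
      by (intro summable_on_add summable_on_cmult_right sx sy)
    fix i
    have "norm (cnj (x i) * y i) = cmod (x i) * cmod (y i)" by (simp add: norm_mult)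
    also have "\<dots> \<le> (q / p) / 2 * (cmod (x i))^2 + (p / q) / 2 * (cmod (y i))^2"
    proof -
      have "0 \<le> (q * cmod (x i) - p * cmod (y i))^2" by simp
      hence "2 * (p*q) * (cmod (x i) * cmod (y i)) \<le> q^2 * (cmod (x i))^2 + p^2 * (cmod (y i))^2"
        by (simp add: power2_eq_square algebra_simps)
      hence "cmod (x i) * cmod (y i) \<le> (q^2 * (cmod (x i))^2 + p^2 * (cmod (y i))^2) / (2 * (p * q))"
        using p q by (simp add: field_simps)
      also have "\<dots> = (q / p) / 2 * (cmod (x i))^2 + (p / q) / 2 * (cmod (y i))^2"
        using p q by (simp add: field_simps power2_eq_square)
      finally show ?thesis .
    qed
    finally show "norm (cnj (x i) * y i) \<le> (q / p) / 2 * (cmod (x i))^2 + (p / q) / 2 * (cmod (y i))^2" .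
  qed
  also have "\<dots> = (q / p) / 2 * p^2 + (p / q) / 2 * q^2"
  proof -
    have e: "infsum (\<lambda>i. (q / p) / 2 * (cmod (x i))^2 + (p / q) / 2 * (cmod (y i))^2) UNIV
      = infsum (\<lambda>i. (q / p) / 2 * (cmod (x i))^2) UNIV + infsum (\<lambda>i. (p / q) / 2 * (cmod (y i))^2) UNIV"
      by (rule infsum_add) (intro summable_on_cmult_right sx sy)+
    show ?thesis unfolding e infsum_cmult_right' by (simp only: norm_sq_sum[OF assms(1)] norm_sq_sum[OF assms(2)] p_def q_def)
  qed
  also have "\<dots> = p * q" using p q by (simp add: field_simps power2_eq_square)
  finally show ?thesis by (simp add: p_def q_def)
qed


lemma inner_self_re: "x \<in> l2 \<Longrightarrow> Re (l2_inner x x) = (l2_norm x)^2"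
  by (simp add: inner_self)

lemma l2_norm_triangle:
  assumes "x \<in> l2" "y \<in> l2"
  shows "l2_norm (\<lambda>i. x i + y i) \<le> l2_norm x + l2_norm y"
proof -
  have xy: "(\<lambda>i. x i + y i) \<in> l2" using assms by (rule l2_add)
  have "l2_inner (\<lambda>i. x i + y i) (\<lambda>i. x i + y i)
     = l2_inner x x + l2_inner x y + (l2_inner y x + l2_inner y y)"
    using inner_lin1[OF xy assms, of 1 1] inner_lin2[OF assms(1) assms, of 1 1] inner_lin2[OF assms(2) assms, of 1 1]
    by simp
  hence "(l2_norm (\<lambda>i. x i + y i))^2 = (l2_norm x)^2 + (l2_norm y)^2 + Re (l2_inner x y + l2_inner y x)"
    using inner_self_re[OF xy] inner_self_re[OF assms(1)] inner_self_re[OF assms(2)]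
    by (metis (no_types, lifting) add.commute add.left_commute plus_complex.sel(1))
  also have "Re (l2_inner x y + l2_inner y x) \<le> 2 * (l2_norm x * l2_norm y)"
  proof -
    have "Re (l2_inner x y) \<le> cmod (l2_inner x y)" by (rule complex_Re_le_cmod)
    moreover have "Re (l2_inner y x) \<le> cmod (l2_inner y x)" by (rule complex_Re_le_cmod)
    moreover have "cmod (l2_inner y x) \<le> l2_norm x * l2_norm y"
      using cauchy_schwarz[OF assms(2) assms(1)] by (simp add: mult.commute)
    ultimately show ?thesis using cauchy_schwarz[OF assms] by simp
  qed
  finally have "(l2_norm (\<lambda>i. x i + y i))^2 \<le> (l2_norm x + l2_norm y)^2"
    by (simp add: power2_eq_square algebra_simps)
  thus ?thesis using l2_norm_nonneg[of x] l2_norm_nonneg[of y]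
    by (meson add_nonneg_nonneg power2_le_imp_le)
qed

lemma bdd_l2: "is_bdd_op T \<Longrightarrow> T x \<in> l2"
  unfolding is_bdd_op_def by (cases "x \<in> l2") auto

lemma bdd_lin: "is_bdd_op T \<Longrightarrow> x \<in> l2 \<Longrightarrow> y \<in> l2 \<Longrightarrow>
   T (\<lambda>i. a * x i + b * y i) = (\<lambda>i. a * T x i + b * T y i)"
  unfolding is_bdd_op_def by blast

lemma bdd_out: "is_bdd_op T \<Longrightarrow> x \<notin> l2 \<Longrightarrow> T x = (\<lambda>i. 0)"
  unfolding is_bdd_op_def by blast

lemma bdd_bound: assumes "is_bdd_op T" shows "\<exists>K\<ge>0. \<forall>x\<in>l2. l2_norm (T x) \<le> K * l2_norm x"
proof -
  obtain K where K: "\<forall>x\<in>l2. l2_norm (T x) \<le> K * l2_norm x" using assms unfolding is_bdd_op_def by blast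
  have "l2_norm (T x) \<le> max K 0 * l2_norm x" if "x \<in> l2" for x
  proof -
    have "l2_norm (T x) \<le> K * l2_norm x" using K that by blast
    also have "\<dots> \<le> max K 0 * l2_norm x" using l2_norm_nonneg[of x] by (simp add: mult_right_mono)
    finally show ?thesis .
  qed
  thus ?thesis by (intro exI[of _ "max K 0"]) simp
qed

lemma bdd_zero: "is_bdd_op T \<Longrightarrow> T (\<lambda>i. 0) = (\<lambda>i. 0)"
  using bdd_lin[of T "\<lambda>i. 0" "\<lambda>i. 0" 0 0] by simp

lemma bdd_add: "is_bdd_op T \<Longrightarrow> x \<in> l2 \<Longrightarrow> y \<in> l2 \<Longrightarrow> T (\<lambda>i. x i + y i) = (\<lambda>i. T x i + T y i)"
  using bdd_lin[of T x y 1 1] by simp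

lemma bdd_scale: "is_bdd_op T \<Longrightarrow> x \<in> l2 \<Longrightarrow> T (\<lambda>i. c * x i) = (\<lambda>i. c * T x i)"
  using bdd_lin[of T x x c 0] by simp

lemma bdd_sub: "is_bdd_op T \<Longrightarrow> x \<in> l2 \<Longrightarrow> y \<in> l2 \<Longrightarrow> T (\<lambda>i. x i - y i) = (\<lambda>i. T x i - T y i)"
  using bdd_lin[of T x y 1 "-1"] by simp

lemma op_norm_bound:
  assumes T: "is_bdd_op T" and x: "x \<in> l2"
  shows "l2_norm (T x) \<le> op_norm T * l2_norm x"
proof -
  obtain K where K0: "K \<ge> 0" and K: "\<And>x. x \<in> l2 \<Longrightarrow> l2_norm (T x) \<le> K * l2_norm x"
    using bdd_bound[OF T] by blast
  define S where "S = {l2_norm (T x) | x. x \<in> l2 \<and> l2_norm x \<le> 1}"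
  have bdd: "bdd_above S" unfolding S_def
  proof (rule bdd_aboveI)
    fix s assume "s \<in> {l2_norm (T x) | x. x \<in> l2 \<and> l2_norm x \<le> 1}"
    then obtain y where y: "y \<in> l2" "l2_norm y \<le> 1" "s = l2_norm (T y)" by blast
    have "s \<le> K * l2_norm y" using K y by simp
    also have "\<dots> \<le> K" using y K0 by (simp add: mult_left_le)
    finally show "s \<le> K" .
  qed
  show ?thesis
  proof (cases "l2_norm x = 0")
    case True
    hence "x = (\<lambda>i. 0)" using l2_norm_zero x by blast
    hence "T x = (\<lambda>i. 0)" using bdd_zero T by simp
    thus ?thesis using True by (simp add: l2_norm_def)
  next
    case False
    hence n: "l2_norm x > 0" using l2_norm_nonneg[of x] by linarith
    define x' where "x' = (\<lambda>i. complex_of_real (1 / l2_norm x) * x i)"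
    have x'l2: "x' \<in> l2" unfolding x'_def using x by (rule l2_scale)
    have nx': "l2_norm x' = 1" unfolding x'_def l2_norm_scale using n by (simp add: norm_divide)
    have Tx': "T x' = (\<lambda>i. complex_of_real (1 / l2_norm x) * T x i)"
      unfolding x'_def by (rule bdd_scale[OF T x])
    have "l2_norm (T x') \<in> S" unfolding S_def using x'l2 nx' by auto
    hence "l2_norm (T x') \<le> op_norm T" unfolding op_norm_def S_def[symmetric]
      using bdd by (rule cSup_upper)
    moreover have "l2_norm (T x') = l2_norm (T x) / l2_norm x"
      unfolding Tx' l2_norm_scale using n by (simp add: norm_divide)
    ultimately show ?thesis using n by (simp add: field_simps)
  qed
qed

lemma op_norm_nonneg: assumes "is_bdd_op T" shows "op_norm T \<ge> 0"
proof -
  have "l2_norm (T (\<lambda>i. 0)) \<in> {l2_norm (T x) | x. x \<in> l2 \<and> l2_norm x \<le> 1}"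
    by (auto simp: l2_norm_def)
  moreover have "bdd_above {l2_norm (T x) | x. x \<in> l2 \<and> l2_norm x \<le> 1}"
  proof -
    obtain K where K0: "K \<ge> 0" and K: "\<And>x. x \<in> l2 \<Longrightarrow> l2_norm (T x) \<le> K * l2_norm x"
      using bdd_bound[OF assms] by blast
    show ?thesis
    proof (rule bdd_aboveI)
      fix s assume "s \<in> {l2_norm (T x) | x. x \<in> l2 \<and> l2_norm x \<le> 1}"
      then obtain y where y: "y \<in> l2" "l2_norm y \<le> 1" "s = l2_norm (T y)" by blast
      have "s \<le> K * l2_norm y" using K y by simp
      also have "\<dots> \<le> K" using y K0 by (simp add: mult_left_le)
      finally show "s \<le> K" .
    qed
  qed
  ultimately have "l2_norm (T (\<lambda>i. 0)) \<le> op_norm T" unfolding op_norm_def by (rule cSup_upper)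
  thus ?thesis using l2_norm_nonneg[of "T (\<lambda>i. 0)"] by linarith
qed

lemma bdd_opI:
  assumes "\<And>x. x \<in> l2 \<Longrightarrow> T x \<in> l2"
    and "\<And>x y a b. x \<in> l2 \<Longrightarrow> y \<in> l2 \<Longrightarrow> T (\<lambda>i. a * x i + b * y i) = (\<lambda>i. a * T x i + b * T y i)"
    and "\<And>x. x \<in> l2 \<Longrightarrow> l2_norm (T x) \<le> K * l2_norm x"
    and "\<And>x. x \<notin> l2 \<Longrightarrow> T x = (\<lambda>i. 0)"
  shows "is_bdd_op T"
  unfolding is_bdd_op_def using assms by blast

lemma bdd_op_zero: "is_bdd_op op_zero"
  by (rule bdd_opI[where K=0]) (auto simp: op_zero_def l2_norm_def)

lemma bdd_op_id: "is_bdd_op op_id"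
proof (rule bdd_opI[where K=1])
  fix x y :: "'a vec" and a b assume "x \<in> l2" "y \<in> l2"
  thus "op_id (\<lambda>i. a * x i + b * y i) = (\<lambda>i. a * op_id x i + b * op_id y i)"
    using l2_lin[of x y a b] by (simp add: op_id_def)
qed (auto simp: op_id_def)

lemma bdd_op_add: fixes S T :: "'i op" assumes "is_bdd_op S" "is_bdd_op T" shows "is_bdd_op (op_add S T)"
proof -
  obtain K1 where K1: "\<forall>x\<in>l2. l2_norm (S x) \<le> K1 * l2_norm x" using bdd_bound[OF assms(1)] by blast
  obtain K2 where K2: "\<forall>x\<in>l2. l2_norm (T x) \<le> K2 * l2_norm x" using bdd_bound[OF assms(2)] by blast
  show ?thesis
  proof (rule bdd_opI[where K="K1 + K2"])
    fix x :: "'i vec" assume x: "x \<in> l2"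
    have "l2_norm (op_add S T x) \<le> l2_norm (S x) + l2_norm (T x)"
      unfolding op_add_def by (rule l2_norm_triangle) (auto intro: bdd_l2 assms)
    also have "\<dots> \<le> (K1 + K2) * l2_norm x" using K1 K2 x by (simp add: algebra_simps add_mono)
    finally show "l2_norm (op_add S T x) \<le> (K1 + K2) * l2_norm x" .
  next
    fix x y :: "'i vec" and a b assume xy: "x \<in> l2" "y \<in> l2"
    show "op_add S T (\<lambda>i. a * x i + b * y i) = (\<lambda>i. a * op_add S T x i + b * op_add S T y i)"
      using bdd_lin[OF assms(1) xy, of a b] bdd_lin[OF assms(2) xy, of a b]
      by (simp add: op_add_def algebra_simps)
  qed (simp_all add: op_add_def bdd_out[OF assms(1)] bdd_out[OF assms(2)] l2_add bdd_l2[OF assms(1)] bdd_l2[OF assms(2)])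
qed

lemma bdd_op_scale: fixes T :: "'i op" assumes "is_bdd_op T" shows "is_bdd_op (op_scale c T)"
proof -
  obtain K where K: "\<forall>x\<in>l2. l2_norm (T x) \<le> K * l2_norm x" using bdd_bound[OF assms] by blast
  show ?thesis
  proof (rule bdd_opI[where K="cmod c * K"])
    fix x :: "'i vec" assume x: "x \<in> l2"
    show "l2_norm (op_scale c T x) \<le> (cmod c * K) * l2_norm x"
      unfolding op_scale_def l2_norm_scale using K x
      by (simp add: mult.assoc mult_left_mono)
  next
    fix x y :: "'i vec" and a b assume xy: "x \<in> l2" "y \<in> l2"
    show "op_scale c T (\<lambda>i. a * x i + b * y i) = (\<lambda>i. a * op_scale c T x i + b * op_scale c T y i)"
      using bdd_lin[OF assms xy, of a b] by (simp add: op_scale_def algebra_simps)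
  qed (simp_all add: op_scale_def bdd_out[OF assms] l2_scale bdd_l2[OF assms])
qed

lemma op_sub_eq: "op_sub S T = op_add S (op_scale (-1) T)"
  by (simp add: op_sub_def op_add_def op_scale_def)

lemma bdd_op_sub: "is_bdd_op S \<Longrightarrow> is_bdd_op T \<Longrightarrow> is_bdd_op (op_sub S T)"
  unfolding op_sub_eq by (intro bdd_op_add bdd_op_scale)

lemma bdd_comp: fixes S T :: "'i op" assumes "is_bdd_op S" "is_bdd_op T" shows "is_bdd_op (S \<circ> T)"
proof -
  obtain K1 where K10: "K1 \<ge> 0" and K1: "\<forall>x\<in>l2. l2_norm (S x) \<le> K1 * l2_norm x" using bdd_bound[OF assms(1)] by blast
  obtain K2 where K2: "\<forall>x\<in>l2. l2_norm (T x) \<le> K2 * l2_norm x" using bdd_bound[OF assms(2)] by blast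
  show ?thesis
  proof (rule bdd_opI[where K="K1 * K2"])
    fix x :: "'i vec" assume x: "x \<in> l2"
    have "l2_norm ((S \<circ> T) x) \<le> K1 * l2_norm (T x)" using K1 bdd_l2[OF assms(2)] by simp
    also have "\<dots> \<le> K1 * (K2 * l2_norm x)" using K2 x K10 by (simp add: mult_left_mono)
    finally show "l2_norm ((S \<circ> T) x) \<le> (K1 * K2) * l2_norm x" by (simp add: mult.assoc)
  next
    fix x y :: "'i vec" and a b assume xy: "x \<in> l2" "y \<in> l2"
    show "(S \<circ> T) (\<lambda>i. a * x i + b * y i) = (\<lambda>i. a * (S \<circ> T) x i + b * (S \<circ> T) y i)"
      using bdd_lin[OF assms(2) xy, of a b] bdd_lin[OF assms(1) bdd_l2[OF assms(2), of x] bdd_l2[OF assms(2), of y], where a=a and b=b]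
      by simp
  qed (simp_all add: bdd_l2[OF assms(1)] bdd_out[OF assms(2)] bdd_zero[OF assms(1)])
qed

lemma id_comp: "is_bdd_op T \<Longrightarrow> op_id \<circ> T = T"
  by (rule ext) (simp add: op_id_def bdd_l2)

lemma comp_id: "is_bdd_op T \<Longrightarrow> T \<circ> op_id = T"
  by (rule ext) (simp add: op_id_def bdd_out bdd_zero)

lemma add_comp: "op_add X Y \<circ> Z = op_add (X \<circ> Z) (Y \<circ> Z)"
  by (simp add: op_add_def fun_eq_iff)

lemma scale_comp: "op_scale c X \<circ> Z = op_scale c (X \<circ> Z)"
  by (simp add: op_scale_def fun_eq_iff)

lemma comp_add: "is_bdd_op P \<Longrightarrow> is_bdd_op X \<Longrightarrow> is_bdd_op Y \<Longrightarrow> P \<circ> op_add X Y = op_add (P \<circ> X) (P \<circ> Y)"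
  by (simp add: op_add_def fun_eq_iff bdd_add bdd_l2)

lemma comp_scale: "is_bdd_op P \<Longrightarrow> is_bdd_op X \<Longrightarrow> P \<circ> op_scale c X = op_scale c (P \<circ> X)"
  by (simp add: op_scale_def fun_eq_iff bdd_scale bdd_l2)

lemma comp_zero: "is_bdd_op P \<Longrightarrow> P \<circ> op_zero = op_zero"
  by (simp add: op_zero_def fun_eq_iff bdd_zero)

lemma zero_comp: "op_zero \<circ> P = op_zero"
  by (simp add: op_zero_def fun_eq_iff)


definition delta :: "'i \<Rightarrow> 'i vec" where
  "delta i = (\<lambda>j. if j = i then 1 else 0)"

lemma fin_l2: assumes "finite F" "\<And>j. j \<notin> F \<Longrightarrow> z j = 0" shows "z \<in> l2"
  unfolding l2_def mem_Collect_eq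
  by (rule finite_nonzero_values_imp_summable_on) (rule finite_subset[OF _ assms(1)], use assms(2) in auto)

lemma delta_l2: "delta i \<in> l2"
  by (rule fin_l2[of "{i}"]) (auto simp: delta_def)

lemma fin_inner:
  assumes "finite F" "\<And>j. j \<notin> F \<Longrightarrow> z j = 0"
  shows "l2_inner z y = (\<Sum>j\<in>F. cnj (z j) * y j)"
proof -
  have "l2_inner z y = infsum (\<lambda>j. cnj (z j) * y j) F"
    unfolding l2_inner_def by (rule infsum_cong_neutral) (use assms(2) in auto)
  thus ?thesis using assms(1) by simp
qed

lemma fin_norm_sq:
  assumes "finite F" "\<And>j. j \<notin> F \<Longrightarrow> z j = 0"
  shows "(l2_norm z)^2 = (\<Sum>j\<in>F. (cmod (z j))^2)"
proof -
  have "(l2_norm z)^2 = infsum (\<lambda>j. (cmod (z j))^2) UNIV" by (rule norm_sq_sum[OF fin_l2[OF assms]])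
  also have "\<dots> = infsum (\<lambda>j. (cmod (z j))^2) F"
    by (rule infsum_cong_neutral) (use assms(2) in auto)
  finally show ?thesis using assms(1) by simp
qed

lemma inner_delta: "l2_inner (delta i) y = y i"
  by (subst fin_inner[of "{i}"]) (auto simp: delta_def)

lemma sum_l2: "finite F \<Longrightarrow> (\<And>i. i \<in> F \<Longrightarrow> v i \<in> l2) \<Longrightarrow> (\<lambda>k. \<Sum>i\<in>F. c i * v i k) \<in> l2"
proof (induction F rule: finite_induct)
  case empty thus ?case by simp
next
  case (insert i F)
  have "(\<lambda>k. 1 * (\<Sum>i\<in>F. c i * v i k) + c i * v i k) \<in> l2"
    by (rule l2_lin) (use insert in auto)
  thus ?case using insert by (simp add: add.commute)
qed

lemma inner_sum1:
  assumes "finite F" "\<And>i. i \<in> F \<Longrightarrow> v i \<in> l2" "y \<in> l2"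
  shows "l2_inner (\<lambda>k. \<Sum>i\<in>F. c i * v i k) y = (\<Sum>i\<in>F. cnj (c i) * l2_inner (v i) y)"
  using assms
proof (induction F rule: finite_induct)
  case empty thus ?case by simp
next
  case (insert i F)
  have "l2_inner (\<lambda>k. 1 * (\<Sum>i\<in>F. c i * v i k) + c i * v i k) y
     = cnj 1 * l2_inner (\<lambda>k. \<Sum>i\<in>F. c i * v i k) y + cnj (c i) * l2_inner (v i) y"
    by (rule inner_lin1) (use insert in \<open>auto intro: sum_l2\<close>)
  thus ?case using insert by (simp add: add.commute)
qed

lemma T_fin:
  assumes T: "is_bdd_op T" and F: "finite F"
  shows "T (\<lambda>j. if j \<in> F then c j else 0) = (\<lambda>k. \<Sum>i\<in>F. c i * T (delta i) k)"
  using F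
proof (induction F rule: finite_induct)
  case empty thus ?case using bdd_zero[OF T] by simp
next
  case (insert i F)
  have fl2: "(\<lambda>j. if j \<in> F then c j else 0) \<in> l2" by (rule fin_l2[OF insert(1)]) auto
  have eq: "(\<lambda>j. if j \<in> insert i F then c j else 0) = (\<lambda>j. 1 * (if j \<in> F then c j else 0) + c i * delta i j)"
    using insert(2) by (auto simp: delta_def fun_eq_iff)
  show ?case unfolding eq bdd_lin[OF T fl2 delta_l2] insert(3) using insert(1,2)
    by (simp add: fun_eq_iff)
qed

lemma cnj_mult_self: "cnj z * z = complex_of_real ((cmod z)^2)"
  by (metis complex_norm_square mult.commute)

definition adjF :: "'i op \<Rightarrow> 'i op" where
  "adjF T = (\<lambda>y. if y \<in> l2 then (\<lambda>i. l2_inner (T (delta i)) y) else (\<lambda>i. 0))"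

lemma adjF_partial:
  assumes T: "is_bdd_op T" and K0: "K \<ge> 0" and K: "\<forall>x\<in>l2. l2_norm (T x) \<le> K * l2_norm x"
    and y: "y \<in> l2" and F: "finite F"
  shows "(\<Sum>i\<in>F. (cmod (l2_inner (T (delta i)) y))^2) \<le> (K * l2_norm y)^2"
proof -
  define c where "c i = l2_inner (T (delta i)) y" for i
  define z where "z = (\<lambda>j. if j \<in> F then c j else 0)"
  define s where "s = (\<Sum>i\<in>F. (cmod (c i))^2)"
  have s0: "s \<ge> 0" unfolding s_def by (simp add: sum_nonneg)
  have zl2: "z \<in> l2" unfolding z_def by (rule fin_l2[OF F]) auto
  have "(l2_norm z)^2 = (\<Sum>j\<in>F. (cmod (z j))^2)" by (rule fin_norm_sq[OF F]) (auto simp: z_def)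
  hence nz: "(l2_norm z)^2 = s" unfolding s_def z_def by simp
  hence nz': "l2_norm z = sqrt s" using l2_norm_nonneg[of z] by (metis real_sqrt_unique)
  have "l2_inner (T z) y = (\<Sum>i\<in>F. cnj (c i) * l2_inner (T (delta i)) y)"
    unfolding z_def T_fin[OF T F] by (rule inner_sum1[OF F _ y]) (simp add: bdd_l2[OF T])
  also have "\<dots> = (\<Sum>i\<in>F. cnj (c i) * c i)" by (simp add: c_def)
  also have "\<dots> = (\<Sum>i\<in>F. complex_of_real ((cmod (c i))^2))" by (simp only: cnj_mult_self)
  also have "\<dots> = of_real s" by (simp only: s_def of_real_sum)
  finally have eq: "l2_inner (T z) y = of_real s" .
  have "s \<le> l2_norm (T z) * l2_norm y"
    using cauchy_schwarz[OF bdd_l2[OF T] y, of z] eq s0 by simp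
  also have "\<dots> \<le> K * l2_norm z * l2_norm y"
    using K zl2 l2_norm_nonneg[of y] by (simp add: mult_right_mono)
  finally have "sqrt s * sqrt s \<le> sqrt s * (K * l2_norm y)" using s0 nz' by (simp add: mult_ac)
  hence "sqrt s \<le> K * l2_norm y \<or> s = 0"
    using s0 by (metis mult_le_cancel_left_pos real_sqrt_gt_0_iff less_eq_real_def)
  have "s \<le> (K * l2_norm y)^2"
  proof (cases "s = 0")
    case False
    hence "sqrt s \<le> K * l2_norm y" using \<open>sqrt s \<le> K * l2_norm y \<or> s = 0\<close> by blast
    hence "(sqrt s)^2 \<le> (K * l2_norm y)^2" using s0 by (intro power_mono) simp_all
    thus ?thesis using s0 by simp
  qed simp
  thus ?thesis by (simp add: s_def c_def)
qed

lemma adjF_l2: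
  assumes T: "is_bdd_op T" and K0: "K \<ge> 0" and K: "\<forall>x\<in>l2. l2_norm (T x) \<le> K * l2_norm x"
    and y: "y \<in> l2"
  shows "adjF T y \<in> l2" "l2_norm (adjF T y) \<le> K * l2_norm y"
proof -
  have bdd: "bdd_above (sum (\<lambda>i. (cmod (l2_inner (T (delta i)) y))^2) ` {F. F \<subseteq> UNIV \<and> finite F})"
    using adjF_partial[OF assms] by (auto intro!: bdd_aboveI)
  have sm: "(\<lambda>i. (cmod (l2_inner (T (delta i)) y))^2) summable_on UNIV"
    by (rule nonneg_bdd_above_summable_on[OF _ bdd]) simp
  thus "adjF T y \<in> l2" using y by (simp add: adjF_def l2_def)
  have "infsum (\<lambda>i. (cmod (l2_inner (T (delta i)) y))^2) UNIV \<le> (K * l2_norm y)^2"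
    by (rule infsum_le_finite_sums[OF sm]) (use adjF_partial[OF assms] in auto)
  hence "(l2_norm (adjF T y))^2 \<le> (K * l2_norm y)^2"
    using norm_sq_sum[OF \<open>adjF T y \<in> l2\<close>] y by (simp add: adjF_def)
  thus "l2_norm (adjF T y) \<le> K * l2_norm y"
    using K0 l2_norm_nonneg[of y] by (meson mult_nonneg_nonneg power2_le_imp_le)
qed

lemma adjF_bdd: fixes T :: "'i op" assumes T: "is_bdd_op T" shows "is_bdd_op (adjF T)"
proof -
  obtain K where K0: "K \<ge> 0" and K: "\<forall>x\<in>l2. l2_norm (T x) \<le> K * l2_norm x"
    using bdd_bound[OF T] by blast
  show ?thesis
  proof (rule bdd_opI[where K=K])
    fix y :: "'i vec" assume "y \<in> l2" thus "adjF T y \<in> l2" by (rule adjF_l2(1)[OF T K0 K])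
  next
    fix y :: "'i vec" assume "y \<in> l2" thus "l2_norm (adjF T y) \<le> K * l2_norm y" by (rule adjF_l2(2)[OF T K0 K])
  next
    fix y :: "'i vec" assume "y \<notin> l2" thus "adjF T y = (\<lambda>i. 0)" by (simp add: adjF_def)
  next
    fix x y :: "'i vec" and a b assume xy: "x \<in> l2" "y \<in> l2"
    show "adjF T (\<lambda>i. a * x i + b * y i) = (\<lambda>i. a * adjF T x i + b * adjF T y i)"
      using xy l2_lin[OF xy, of a b] inner_lin2[OF bdd_l2[OF T] xy] by (simp add: adjF_def)
  qed
qed

lemma tail_norm:
  assumes x: "x \<in> l2" and F: "finite F"
  shows "(l2_norm (\<lambda>j. if j \<in> F then 0 else x j))^2
     = infsum (\<lambda>j. (cmod (x j))^2) UNIV - (\<Sum>j\<in>F. (cmod (x j))^2)"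
proof -
  define f where "f j = (cmod (x j))^2" for j
  have sf: "f summable_on UNIV" using x by (simp add: l2_def f_def[abs_def])
  have s1: "(\<lambda>j. if j \<in> F then f j else 0) summable_on UNIV"
    by (rule finite_nonzero_values_imp_summable_on) (rule finite_subset[OF _ F], auto)
  have s2: "(\<lambda>j. if j \<in> F then 0 else f j) summable_on UNIV"
    by (rule summable_on_comparison_test[OF sf]) (auto simp: f_def)
  have "infsum f UNIV = infsum (\<lambda>j. (if j \<in> F then f j else 0) + (if j \<in> F then 0 else f j)) UNIV"
    by (rule infsum_cong) simp
  also have "\<dots> = infsum (\<lambda>j. if j \<in> F then f j else 0) UNIV + infsum (\<lambda>j. if j \<in> F then 0 else f j) UNIV"
    by (rule infsum_add[OF s1 s2])
  also have "infsum (\<lambda>j. if j \<in> F then f j else 0) UNIV = infsum f F"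
    by (rule infsum_cong_neutral) auto
  also have "\<dots> = sum f F" using F by simp
  finally have e: "infsum (\<lambda>j. if j \<in> F then 0 else f j) UNIV = infsum f UNIV - sum f F" by simp
  have eqn: "(\<lambda>i. (cmod (if i \<in> F then 0 else x i))^2) = (\<lambda>j. if j \<in> F then 0 else f j)"
    by (rule ext) (simp add: f_def)
  have rl2: "(\<lambda>j. if j \<in> F then 0 else x j) \<in> l2"
    unfolding l2_def mem_Collect_eq eqn using s2 .
  have "(l2_norm (\<lambda>j. if j \<in> F then 0 else x j))^2 = infsum (\<lambda>j. if j \<in> F then 0 else f j) UNIV"
    unfolding norm_sq_sum[OF rl2] f_def by (rule infsum_cong) simp
  thus ?thesis using e by (simp add: f_def[abs_def])
qed

lemma adjF_inner:
  assumes T: "is_bdd_op T" and x: "x \<in> l2" and y: "y \<in> l2"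
  shows "l2_inner (T x) y = l2_inner x (adjF T y)"
proof -
  obtain K where K0: "K \<ge> 0" and K: "\<forall>x\<in>l2. l2_norm (T x) \<le> K * l2_norm x"
    using bdd_bound[OF T] by blast
  define S where "S = adjF T y"
  have Sl2: "S \<in> l2" unfolding S_def by (rule adjF_l2(1)[OF T K0 K y])
  define g where "g z = l2_inner (T z) y - l2_inner z S" for z
  define C where "C = K * l2_norm y + l2_norm S"
  have C0: "C \<ge> 0" unfolding C_def using K0 l2_norm_nonneg[of y] l2_norm_nonneg[of S] by simp
  have gfin: "g (\<lambda>j. if j \<in> F then x j else 0) = 0" if F: "finite F" for F
  proof -
    have "l2_inner (T (\<lambda>j. if j \<in> F then x j else 0)) y = (\<Sum>i\<in>F. cnj (x i) * l2_inner (T (delta i)) y)"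
      unfolding T_fin[OF T F] by (rule inner_sum1[OF F _ y]) (simp add: bdd_l2[OF T])
    moreover have "l2_inner (\<lambda>j. if j \<in> F then x j else 0) S = (\<Sum>j\<in>F. cnj (x j) * S j)"
      by (subst fin_inner[OF F]) auto
    moreover have "S j = l2_inner (T (delta j)) y" for j using y by (simp add: S_def adjF_def)
    ultimately show ?thesis by (simp add: g_def)
  qed
  have gbound: "cmod (g z) \<le> C * l2_norm z" if z: "z \<in> l2" for z
  proof -
    have "cmod (g z) \<le> cmod (l2_inner (T z) y) + cmod (l2_inner z S)"
      unfolding g_def by (rule norm_triangle_ineq4)
    also have "\<dots> \<le> l2_norm (T z) * l2_norm y + l2_norm z * l2_norm S"
      by (intro add_mono cauchy_schwarz bdd_l2[OF T] y z Sl2)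
    also have "\<dots> \<le> K * l2_norm z * l2_norm y + l2_norm z * l2_norm S"
      using K z l2_norm_nonneg[of y] by (simp add: mult_right_mono)
    finally show ?thesis by (simp add: C_def algebra_simps)
  qed
  have gsplit: "g x = g (\<lambda>j. if j \<in> F then 0 else x j)" if F: "finite F" for F
  proof -
    define r where "r = (\<lambda>j. if j \<in> F then 0 else x j)"
    define xF where "xF = (\<lambda>j. if j \<in> F then x j else 0)"
    have xFl2: "xF \<in> l2" unfolding xF_def by (rule fin_l2[OF F]) auto
    have rl2: "r \<in> l2" proof -
      have "(\<lambda>i. x i - xF i) \<in> l2" by (rule l2_sub[OF x xFl2])
      moreover have "(\<lambda>i. x i - xF i) = r" by (auto simp: r_def xF_def)
      ultimately show ?thesis by simp
    qed
    have xe: "x = (\<lambda>i. 1 * r i + 1 * xF i)" by (auto simp: r_def xF_def)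
    have "l2_inner (T x) y = l2_inner (\<lambda>i. 1 * T r i + 1 * T xF i) y"
      by (subst xe, subst bdd_lin[OF T rl2 xFl2]) simp
    also have "\<dots> = l2_inner (T r) y + l2_inner (T xF) y"
      using inner_lin1[OF y bdd_l2[OF T] bdd_l2[OF T], of 1 r 1 xF] by simp
    finally have e1: "l2_inner (T x) y = l2_inner (T r) y + l2_inner (T xF) y" .
    have "l2_inner x S = l2_inner (\<lambda>i. 1 * r i + 1 * xF i) S" by (subst xe) simp
    also have "\<dots> = l2_inner r S + l2_inner xF S"
      using inner_lin1[OF Sl2 rl2 xFl2, of 1 1] by simp
    finally have e2: "l2_inner x S = l2_inner r S + l2_inner xF S" .
    have "g xF = 0" unfolding xF_def by (rule gfin[OF F])
    thus ?thesis using e1 e2 by (simp add: g_def r_def[symmetric] xF_def[symmetric])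
  qed
  have small: "cmod (g x) \<le> C * sqrt e" if e: "e > 0" for e
  proof -
    have sf: "(\<lambda>j. (cmod (x j))^2) summable_on UNIV" using x by (simp add: l2_def)
    obtain F where F: "finite F" and d: "dist (sum (\<lambda>j. (cmod (x j))^2) F) (infsum (\<lambda>j. (cmod (x j))^2) UNIV) \<le> e"
      using infsum_finite_approximation[OF sf e] by blast
    define r where "r = (\<lambda>j. if j \<in> F then 0 else x j)"
    have rl2: "r \<in> l2" unfolding r_def
    proof -
      have "(\<lambda>i. x i - (if i \<in> F then x i else 0)) \<in> l2" by (rule l2_sub[OF x fin_l2[OF F]]) auto
      moreover have "(\<lambda>i. x i - (if i \<in> F then x i else 0)) = (\<lambda>j. if j \<in> F then 0 else x j)" by auto
      ultimately show "(\<lambda>j. if j \<in> F then 0 else x j) \<in> l2" by simp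
    qed
    have "(l2_norm r)^2 \<le> e" unfolding r_def tail_norm[OF x F] using d by (simp add: dist_real_def)
    hence "l2_norm r \<le> sqrt e" using l2_norm_nonneg[of r] by (simp add: real_le_rsqrt)
    hence "C * l2_norm r \<le> C * sqrt e" using C0 by (simp add: mult_left_mono)
    moreover have "g x = g r" unfolding r_def by (rule gsplit[OF F])
    ultimately show ?thesis using gbound[OF rl2] by simp
  qed
  have "g x = 0"
  proof (rule ccontr)
    assume ne: "g x \<noteq> 0"
    define e where "e = (cmod (g x) / (2 * (C + 1)))^2"
    have e0: "e > 0" unfolding e_def using ne C0 by simp
    have "sqrt e = cmod (g x) / (2 * (C + 1))" unfolding e_def using C0 by simp
    hence eq: "cmod (g x) = 2 * (C + 1) * sqrt e" using C0 by (simp add: field_simps)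
    have se: "sqrt e > 0" using e0 by simp
    have "0 \<le> C * sqrt e" using C0 se by simp
    moreover have "2 * (C + 1) * sqrt e = 2 * (C * sqrt e) + 2 * sqrt e" by (simp add: algebra_simps)
    ultimately have "C * sqrt e < 2 * (C + 1) * sqrt e" using se by linarith
    hence "C * sqrt e < cmod (g x)" using eq by simp
    thus False using small[OF e0] by simp
  qed
  thus ?thesis by (simp add: g_def S_def)
qed

lemma adjoint_unique:
  assumes "is_adjoint T S1" "is_adjoint T S2" and T: "is_bdd_op T"
  shows "S1 = S2"
proof (rule ext)
  fix y
  have b1: "is_bdd_op S1" and b2: "is_bdd_op S2" using assms by (auto simp: is_adjoint_def)
  show "S1 y = S2 y"
  proof (cases "y \<in> l2")
    case True
    show ?thesis
    proof (rule ext)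
      fix i
      have "S1 y i = l2_inner (delta i) (S1 y)" by (simp add: inner_delta)
      also have "\<dots> = l2_inner (T (delta i)) y" using assms(1) True delta_l2 unfolding is_adjoint_def by metis
      also have "\<dots> = l2_inner (delta i) (S2 y)" using assms(2) True delta_l2 unfolding is_adjoint_def by metis
      finally show "S1 y i = S2 y i" by (simp add: inner_delta)
    qed
  next
    case False
    thus ?thesis using bdd_out[OF b1] bdd_out[OF b2] by simp
  qed
qed

lemma adj_prop: assumes T: "is_bdd_op T" shows "is_adjoint T (adj T)"
proof -
  have ex: "is_adjoint T (adjF T)" unfolding is_adjoint_def
    using adjF_bdd[OF T] adjF_inner[OF T] by blast
  show ?thesis unfolding adj_def
    by (rule theI[of "is_adjoint T", OF ex]) (rule adjoint_unique[OF _ ex T])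
qed

lemma adj_eq: "is_bdd_op T \<Longrightarrow> is_adjoint T S \<Longrightarrow> adj T = S"
  using adj_prop adjoint_unique by blast

lemma adj_bdd: "is_bdd_op T \<Longrightarrow> is_bdd_op (adj T)"
  using adj_prop is_adjoint_def by blast

lemma adj_inner: "is_bdd_op T \<Longrightarrow> x \<in> l2 \<Longrightarrow> y \<in> l2 \<Longrightarrow> l2_inner (T x) y = l2_inner x (adj T y)"
  using adj_prop is_adjoint_def by blast

lemma adj_inner': "is_bdd_op T \<Longrightarrow> x \<in> l2 \<Longrightarrow> y \<in> l2 \<Longrightarrow> l2_inner (adj T x) y = l2_inner x (T y)"
  by (metis adj_inner inner_cnj)


lemma inner_add1: "x \<in> l2 \<Longrightarrow> y \<in> l2 \<Longrightarrow> z \<in> l2 \<Longrightarrow> l2_inner (\<lambda>i. x i + y i) z = l2_inner x z + l2_inner y z"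
  using inner_lin1[of z x y 1 1] by simp

lemma inner_add2: "x \<in> l2 \<Longrightarrow> y \<in> l2 \<Longrightarrow> z \<in> l2 \<Longrightarrow> l2_inner z (\<lambda>i. x i + y i) = l2_inner z x + l2_inner z y"
  using inner_lin2[of z x y 1 1] by simp

lemma inner_scale1: "x \<in> l2 \<Longrightarrow> z \<in> l2 \<Longrightarrow> l2_inner (\<lambda>i. c * x i) z = cnj c * l2_inner x z"
  using inner_lin1[of z x x c 0] by simp

lemma inner_scale2: "x \<in> l2 \<Longrightarrow> z \<in> l2 \<Longrightarrow> l2_inner z (\<lambda>i. c * x i) = c * l2_inner z x"
  using inner_lin2[of z x x c 0] by simp

lemma adj_adj: "is_bdd_op T \<Longrightarrow> adj (adj T) = T"
  by (rule adj_eq) (auto simp: is_adjoint_def adj_bdd adj_inner')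

lemma adj_comp: fixes S T :: "'i op" assumes "is_bdd_op S" "is_bdd_op T" shows "adj (S \<circ> T) = adj T \<circ> adj S"
proof (rule adj_eq)
  show "is_bdd_op (S \<circ> T)" using assms by (rule bdd_comp)
  show "is_adjoint (S \<circ> T) (adj T \<circ> adj S)" unfolding is_adjoint_def
  proof (intro conjI ballI)
    show "is_bdd_op (adj T \<circ> adj S)" using assms by (intro bdd_comp adj_bdd)
    fix x y :: "'i vec" assume xy: "x \<in> l2" "y \<in> l2"
    have "l2_inner ((S \<circ> T) x) y = l2_inner (T x) (adj S y)"
      using adj_inner[OF assms(1) bdd_l2[OF assms(2)] xy(2)] by simp
    also have "\<dots> = l2_inner x (adj T (adj S y))"
      by (rule adj_inner[OF assms(2) xy(1) bdd_l2[OF adj_bdd[OF assms(1)]]])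
    finally show "l2_inner ((S \<circ> T) x) y = l2_inner x ((adj T \<circ> adj S) y)" by simp
  qed
qed

lemma adj_add: fixes S T :: "'i op" assumes "is_bdd_op S" "is_bdd_op T" shows "adj (op_add S T) = op_add (adj S) (adj T)"
proof (rule adj_eq)
  show "is_bdd_op (op_add S T)" using assms by (rule bdd_op_add)
  show "is_adjoint (op_add S T) (op_add (adj S) (adj T))" unfolding is_adjoint_def
  proof (intro conjI ballI)
    show "is_bdd_op (op_add (adj S) (adj T))" using assms by (intro bdd_op_add adj_bdd)
    fix x y :: "'i vec" assume xy: "x \<in> l2" "y \<in> l2"
    have "l2_inner (op_add S T x) y = l2_inner (S x) y + l2_inner (T x) y"
      unfolding op_add_def by (rule inner_add1) (auto intro: bdd_l2 assms xy)
    also have "\<dots> = l2_inner x (adj S y) + l2_inner x (adj T y)"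
      using adj_inner[OF assms(1) xy] adj_inner[OF assms(2) xy] by simp
    also have "\<dots> = l2_inner x (op_add (adj S) (adj T) y)"
      unfolding op_add_def by (rule inner_add2[symmetric]) (auto intro: bdd_l2 adj_bdd assms xy)
    finally show "l2_inner (op_add S T x) y = l2_inner x (op_add (adj S) (adj T) y)" .
  qed
qed

lemma adj_scale: fixes T :: "'i op" assumes "is_bdd_op T" shows "adj (op_scale c T) = op_scale (cnj c) (adj T)"
proof (rule adj_eq)
  show "is_bdd_op (op_scale c T)" using assms by (rule bdd_op_scale)
  show "is_adjoint (op_scale c T) (op_scale (cnj c) (adj T))" unfolding is_adjoint_def
  proof (intro conjI ballI)
    show "is_bdd_op (op_scale (cnj c) (adj T))" using assms by (intro bdd_op_scale adj_bdd)
    fix x y :: "'i vec" assume xy: "x \<in> l2" "y \<in> l2"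
    have "l2_inner (op_scale c T x) y = cnj c * l2_inner (T x) y"
      unfolding op_scale_def by (rule inner_scale1) (auto intro: bdd_l2 assms xy)
    also have "\<dots> = cnj c * l2_inner x (adj T y)"
      using adj_inner[OF assms xy] by simp
    also have "\<dots> = l2_inner x (op_scale (cnj c) (adj T) y)"
      unfolding op_scale_def by (rule inner_scale2[symmetric]) (auto intro: bdd_l2 adj_bdd assms xy)
    finally show "l2_inner (op_scale c T x) y = l2_inner x (op_scale (cnj c) (adj T) y)" .
  qed
qed

lemma adj_id: "adj op_id = op_id"
  by (rule adj_eq[OF bdd_op_id]) (unfold is_adjoint_def, intro conjI bdd_op_id ballI, simp add: op_id_def)

lemma adj_zero: "adj op_zero = op_zero"
  by (rule adj_eq[OF bdd_op_zero]) (unfold is_adjoint_def, intro conjI bdd_op_zero ballI, simp add: op_zero_def)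

lemma adj_sub: "is_bdd_op S \<Longrightarrow> is_bdd_op T \<Longrightarrow> adj (op_sub S T) = op_sub (adj S) (adj T)"
  unfolding op_sub_eq by (simp add: adj_add adj_scale bdd_op_scale)


lemma commutant_closed:
  assumes B: "\<forall>s\<in>B. is_bdd_op s"
  shows "op_id \<in> commutant B" "op_zero \<in> commutant B"
    "X \<in> commutant B \<Longrightarrow> Y \<in> commutant B \<Longrightarrow> op_add X Y \<in> commutant B"
    "X \<in> commutant B \<Longrightarrow> op_scale c X \<in> commutant B"
    "X \<in> commutant B \<Longrightarrow> Y \<in> commutant B \<Longrightarrow> X \<circ> Y \<in> commutant B"
proof -
  show "op_id \<in> commutant B" unfolding commutant_def using B
    by (auto simp: bdd_op_id id_comp comp_id)
  show "op_zero \<in> commutant B" unfolding commutant_def using B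
    by (auto simp: bdd_op_zero comp_zero zero_comp)
  show "X \<in> commutant B \<Longrightarrow> Y \<in> commutant B \<Longrightarrow> op_add X Y \<in> commutant B"
    unfolding commutant_def using B by (auto simp: bdd_op_add add_comp comp_add)
  show "X \<in> commutant B \<Longrightarrow> op_scale c X \<in> commutant B"
    unfolding commutant_def using B by (auto simp: bdd_op_scale scale_comp comp_scale)
  show "X \<in> commutant B \<Longrightarrow> Y \<in> commutant B \<Longrightarrow> X \<circ> Y \<in> commutant B"
  proof -
    assume X: "X \<in> commutant B" and Y: "Y \<in> commutant B"
    have bX: "is_bdd_op X" and bY: "is_bdd_op Y" using X Y by (auto simp: commutant_def)
    have "(X \<circ> Y) \<circ> s = s \<circ> (X \<circ> Y)" if s: "s \<in> B" for s
    proof -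
      have xs: "X \<circ> s = s \<circ> X" and ys: "Y \<circ> s = s \<circ> Y" using X Y s by (auto simp: commutant_def)
      have "(X \<circ> Y) \<circ> s = X \<circ> (Y \<circ> s)" by (rule o_assoc[symmetric])
      also have "\<dots> = (X \<circ> s) \<circ> Y" by (simp add: ys o_assoc)
      also have "\<dots> = s \<circ> (X \<circ> Y)" by (simp add: xs o_assoc)
      finally show ?thesis .
    qed
    thus ?thesis unfolding commutant_def using bdd_comp[OF bX bY] by blast
  qed
qed

locale twps =
  fixes A :: "'i op set" and \<tau> :: "'i op \<Rightarrow> complex"
  assumes tw: "tracial_W_prob_space A \<tau>"
begin

lemma vn: "von_neumann_algebra A" using tw by (simp add: tracial_W_prob_space_def)

lemma A_bdd: "a \<in> A \<Longrightarrow> is_bdd_op a" using vn by (simp add: von_neumann_algebra_def)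
lemma A_adj: "a \<in> A \<Longrightarrow> adj a \<in> A" using vn by (simp add: von_neumann_algebra_def)
lemma A_eq: "A = commutant (commutant A)" using vn by (simp add: von_neumann_algebra_def)

lemma cA_bdd: "\<forall>s\<in>commutant A. is_bdd_op s" by (simp add: commutant_def)

lemma A_id: "op_id \<in> A" using commutant_closed(1)[OF cA_bdd] A_eq by simp
lemma A_zero: "op_zero \<in> A" using commutant_closed(2)[OF cA_bdd] A_eq by simp
lemma A_add: "X \<in> A \<Longrightarrow> Y \<in> A \<Longrightarrow> op_add X Y \<in> A"
  using commutant_closed(3)[OF cA_bdd] A_eq by metis
lemma A_scale: "X \<in> A \<Longrightarrow> op_scale c X \<in> A"
  using commutant_closed(4)[OF cA_bdd] A_eq by metis
lemma A_comp: "X \<in> A \<Longrightarrow> Y \<in> A \<Longrightarrow> X \<circ> Y \<in> A"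
  using commutant_closed(5)[OF cA_bdd] A_eq by metis
lemma A_sub: "X \<in> A \<Longrightarrow> Y \<in> A \<Longrightarrow> op_sub X Y \<in> A"
  unfolding op_sub_eq by (intro A_add A_scale)

lemma tau_lin: "a \<in> A \<Longrightarrow> b \<in> A \<Longrightarrow> \<tau> (op_add (op_scale c a) (op_scale d b)) = c * \<tau> a + d * \<tau> b"
  using tw by (simp add: tracial_W_prob_space_def)

lemma tau_add: "a \<in> A \<Longrightarrow> b \<in> A \<Longrightarrow> \<tau> (op_add a b) = \<tau> a + \<tau> b"
proof -
  assume ab: "a \<in> A" "b \<in> A"
  have "op_add (op_scale 1 a) (op_scale 1 b) = op_add a b" by (simp add: op_add_def op_scale_def)
  thus ?thesis using tau_lin[OF ab, of 1 1] by simp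
qed

lemma tau_scale: "a \<in> A \<Longrightarrow> \<tau> (op_scale c a) = c * \<tau> a"
proof -
  assume a: "a \<in> A"
  have "op_add (op_scale c a) (op_scale 0 a) = op_scale c a" by (simp add: op_add_def op_scale_def)
  thus ?thesis using tau_lin[OF a a, of c 0] by simp
qed

lemma tau_zero: "\<tau> op_zero = 0"
proof -
  have "op_scale 0 op_zero = op_zero" by (simp add: op_zero_def op_scale_def)
  thus ?thesis using tau_scale[OF A_zero, of 0] by (metis mult_zero_left)
qed

lemma tau_sub: "a \<in> A \<Longrightarrow> b \<in> A \<Longrightarrow> \<tau> (op_sub a b) = \<tau> a - \<tau> b"
  unfolding op_sub_eq by (simp add: tau_add tau_scale A_scale)

lemma tau_id: "\<tau> op_id = 1" using tw by (simp add: tracial_W_prob_space_def)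

lemma tau_pos: "a \<in> A \<Longrightarrow> nonneg_complex (\<tau> (adj a \<circ> a))" using tw by (simp add: tracial_W_prob_space_def)

lemma tau_normal: "normal_functional A \<tau>" using tw by (simp add: tracial_W_prob_space_def)

lemma tau_posop:
  assumes h: "h \<in> A" "self_adjoint h" "op_pos h"
  shows "Re (\<tau> h) \<ge> 0"
proof -
  have sub0: "op_sub h op_zero = h" by (simp add: op_sub_def op_zero_def)
  have subh: "op_sub h h = op_zero" by (simp add: op_sub_def op_zero_def)
  have pz: "op_pos op_zero" by (simp add: op_pos_def op_zero_def nonneg_complex_def)
  have sz: "self_adjoint op_zero" by (simp add: self_adjoint_def bdd_op_zero adj_zero)
  have le0h: "op_le op_zero h" unfolding op_le_def sub0 by (rule h(3))
  have lehh: "op_le h h" unfolding op_le_def subh by (rule pz)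
  have "Re (\<tau> h) = Sup ((\<lambda>d. Re (\<tau> d)) ` {op_zero, h})"
    using tau_normal unfolding normal_functional_def
    apply (elim allE[of _ "{op_zero, h}"] allE[of _ h])
    using A_zero h sz pz le0h lehh by auto
  also have "\<dots> = max 0 (Re (\<tau> h))" by (simp add: tau_zero cSup_insert sup_max)
  finally show ?thesis by simp
qed

end


context twps begin

definition B :: "'i op \<Rightarrow> 'i op \<Rightarrow> complex" where
  "B X Y = \<tau> (adj X \<circ> Y)"

lemma B_add2: "X \<in> A \<Longrightarrow> Y \<in> A \<Longrightarrow> Z \<in> A \<Longrightarrow> B X (op_add Y Z) = B X Y + B X Z"
  unfolding B_def by (simp add: comp_add adj_bdd A_bdd tau_add A_comp A_adj)

lemma B_scale2: "X \<in> A \<Longrightarrow> Y \<in> A \<Longrightarrow> B X (op_scale c Y) = c * B X Y"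
  unfolding B_def by (simp add: comp_scale adj_bdd A_bdd tau_scale A_comp A_adj)

lemma B_add1: "X \<in> A \<Longrightarrow> Y \<in> A \<Longrightarrow> Z \<in> A \<Longrightarrow> B (op_add X Y) Z = B X Z + B Y Z"
  unfolding B_def by (simp add: adj_add add_comp A_bdd tau_add A_comp A_adj)

lemma B_scale1: "X \<in> A \<Longrightarrow> Y \<in> A \<Longrightarrow> B (op_scale c X) Y = cnj c * B X Y"
  unfolding B_def by (simp add: adj_scale scale_comp A_bdd tau_scale A_comp A_adj)

lemma B_sub1: "X \<in> A \<Longrightarrow> Y \<in> A \<Longrightarrow> Z \<in> A \<Longrightarrow> B (op_sub X Y) Z = B X Z - B Y Z"
  unfolding op_sub_eq by (simp add: B_add1 B_scale1 A_scale)

lemma B_sub2: "X \<in> A \<Longrightarrow> Y \<in> A \<Longrightarrow> Z \<in> A \<Longrightarrow> B X (op_sub Y Z) = B X Y - B X Z"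
  unfolding op_sub_eq by (simp add: B_add2 B_scale2 A_scale)

lemma B_self: "X \<in> A \<Longrightarrow> Im (B X X) = 0 \<and> Re (B X X) \<ge> 0"
  unfolding B_def using tau_pos by (simp add: nonneg_complex_def)

lemma B_id1: "X \<in> A \<Longrightarrow> B op_id X = \<tau> X"
  unfolding B_def by (simp add: adj_id id_comp A_bdd)

lemma B_id2: "X \<in> A \<Longrightarrow> B X op_id = \<tau> (adj X)"
  unfolding B_def by (simp add: comp_id adj_bdd A_bdd)

lemma B_idid: "B op_id op_id = 1"
  using B_id1[OF A_id] tau_id by simp

lemma tau_adj: assumes X: "X \<in> A" shows "\<tau> (adj X) = cnj (\<tau> X)"
proof -
  have e1: "B (op_add X op_id) (op_add X op_id) = B X X + B X op_id + \<tau> X + 1"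
    by (simp add: B_add1 B_add2 A_add A_id X B_id1 B_idid)
  have e2: "B (op_add X (op_scale \<i> op_id)) (op_add X (op_scale \<i> op_id)) = B X X + \<i> * B X op_id - \<i> * \<tau> X + 1"
    by (simp add: B_add1 B_add2 A_add A_id X B_id1 B_idid A_scale B_scale1 B_scale2 algebra_simps)
  note e1 = e1[unfolded B_id2[OF X]] and e2 = e2[unfolded B_id2[OF X]]
  have i1: "Im (B (op_add X op_id) (op_add X op_id)) = 0" using B_self A_add A_id X by blast
  have i2: "Im (B (op_add X (op_scale \<i> op_id)) (op_add X (op_scale \<i> op_id))) = 0"
    using B_self A_add A_id X A_scale by blast
  have i0: "Im (B X X) = 0" using B_self X by blast
  have "Im (\<tau> (adj X)) = - Im (\<tau> X)" using e1 i1 i0 by simp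
  moreover have "Re (\<tau> (adj X)) = Re (\<tau> X)" using e2 i2 i0 by simp
  ultimately show ?thesis by (simp add: complex_eq_iff)
qed

lemma key_ineq:
  assumes c: "c \<in> A" and e: "\<eta> \<in> A"
  shows "Re (B (c \<circ> \<eta>) (c \<circ> \<eta>)) \<le> (op_norm c)^2 * Re (B \<eta> \<eta>)"
proof -
  define K where "K = complex_of_real ((op_norm c)^2)"
  define P where "P = adj \<eta> \<circ> \<eta>"
  define Q where "Q = adj (c \<circ> \<eta>) \<circ> (c \<circ> \<eta>)"
  define h where "h = op_sub (op_scale K P) Q"
  have bc: "is_bdd_op c" and be: "is_bdd_op \<eta>" using c e A_bdd by auto
  have ce: "c \<circ> \<eta> \<in> A" using A_comp c e by blast
  have PA: "P \<in> A" unfolding P_def using A_comp A_adj e by blast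
  have QA: "Q \<in> A" unfolding Q_def using A_comp A_adj ce by blast
  have hA: "h \<in> A" unfolding h_def using A_sub A_scale PA QA by blast
  have bP: "is_bdd_op P" and bQ: "is_bdd_op Q" using PA QA A_bdd by auto
  have adjP: "adj P = P" unfolding P_def using be by (simp add: adj_comp adj_bdd adj_adj)
  have adjQ: "adj Q = Q" unfolding Q_def using be bc by (simp add: adj_comp adj_bdd adj_adj bdd_comp)
  have sa: "self_adjoint h" unfolding self_adjoint_def h_def
    using bP bQ adjP adjQ by (simp add: adj_sub adj_scale bdd_op_scale bdd_op_sub K_def)
  have pos: "op_pos h" unfolding op_pos_def
  proof
    fix x :: "'i vec" assume x: "x \<in> l2"
    have ex: "\<eta> x \<in> l2" by (rule bdd_l2[OF be])
    have cex: "c (\<eta> x) \<in> l2" by (rule bdd_l2[OF bc])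
    have Px: "P x \<in> l2" and Qx: "Q x \<in> l2" using bP bQ bdd_l2 by auto
    have hx: "h x = (\<lambda>i. K * P x i + (-1) * Q x i)" by (simp add: h_def op_sub_def op_scale_def)
    have "l2_inner x (h x) = K * l2_inner x (P x) + (-1) * l2_inner x (Q x)"
      unfolding hx by (rule inner_lin2[OF x Px Qx])
    moreover have "l2_inner x (P x) = l2_inner (\<eta> x) (\<eta> x)"
      unfolding P_def using adj_inner[OF be x ex] by simp
    moreover have "l2_inner x (Q x) = l2_inner (c (\<eta> x)) (c (\<eta> x))"
      unfolding Q_def using adj_inner[OF bdd_comp[OF bc be] x cex] by simp
    ultimately have eq: "l2_inner x (h x) = of_real ((op_norm c)^2 * (l2_norm (\<eta> x))^2 - (l2_norm (c (\<eta> x)))^2)"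
      using inner_self[OF ex] inner_self[OF cex] by (simp add: K_def)
    have "l2_norm (c (\<eta> x)) \<le> op_norm c * l2_norm (\<eta> x)" by (rule op_norm_bound[OF bc ex])
    hence "(l2_norm (c (\<eta> x)))^2 \<le> (op_norm c * l2_norm (\<eta> x))^2"
      using l2_norm_nonneg by (intro power_mono) auto
    hence "(op_norm c)^2 * (l2_norm (\<eta> x))^2 - (l2_norm (c (\<eta> x)))^2 \<ge> 0"
      by (simp add: power_mult_distrib)
    thus "nonneg_complex (l2_inner x (h x))" unfolding eq nonneg_complex_def by simp
  qed
  have "Re (\<tau> h) \<ge> 0" by (rule tau_posop[OF hA sa pos])
  moreover have "\<tau> h = K * \<tau> P - \<tau> Q" unfolding h_def
    using PA QA by (simp add: tau_sub tau_scale A_scale)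
  ultimately show ?thesis by (simp add: B_def P_def Q_def K_def)
qed

lemma norm2_le: assumes D: "D \<in> A" shows "Re (B D D) \<le> (op_norm D)^2"
  using key_ineq[OF D A_id] comp_id[OF A_bdd[OF D]] B_idid by simp

lemma quad_disc:
  fixes p q s :: real
  assumes "\<And>t. 0 \<le> p + t * q + t^2 * s" "s \<ge> 0"
  shows "q^2 \<le> 4 * p * s"
proof (cases "s = 0")
  case True
  have "q = 0"
  proof (rule ccontr)
    assume q: "q \<noteq> 0"
    have "0 \<le> p + (-(\<bar>p\<bar> + 1) / q) * q" using assms(1)[of "-(\<bar>p\<bar> + 1) / q"] True by simp
    moreover have "(-(\<bar>p\<bar> + 1) / q) * q = -(\<bar>p\<bar> + 1)" using q by simp
    ultimately show False by linarith
  qed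
  thus ?thesis using True by simp
next
  case False
  hence s: "s > 0" using assms(2) by simp
  have "0 \<le> p + (-q / (2 * s)) * q + (-q / (2 * s))^2 * s" by (rule assms(1))
  also have "\<dots> = p - q^2 / (4 * s)" using s by (simp add: field_simps power2_eq_square)
  finally have "q^2 / (4 * s) \<le> p" by simp
  thus ?thesis using s by (simp add: field_simps)
qed

lemma B_cs:
  assumes X: "X \<in> A" and Y: "Y \<in> A"
  shows "(Re (B X Y + B Y X))^2 \<le> 4 * Re (B X X) * Re (B Y Y)"
proof (rule quad_disc)
  fix t :: real
  have "Re (B (op_add X (op_scale (of_real t) Y)) (op_add X (op_scale (of_real t) Y))) \<ge> 0"
    using B_self A_add A_scale X Y by blast
  moreover have "B (op_add X (op_scale (of_real t) Y)) (op_add X (op_scale (of_real t) Y))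
    = B X X + of_real t * (B X Y + B Y X) + of_real (t^2) * B Y Y"
    by (simp add: B_add1 B_add2 B_scale1 B_scale2 A_add A_scale X Y algebra_simps power2_eq_square)
  ultimately show "0 \<le> Re (B X X) + t * Re (B X Y + B Y X) + t^2 * Re (B Y Y)" by simp
next
  show "Re (B Y Y) \<ge> 0" using B_self Y by blast
qed

lemma B_cont_bound:
  assumes X: "X \<in> A" and Y: "Y \<in> A"
  shows "\<bar>Re (B X X) - Re (B Y Y)\<bar> \<le> 2 * sqrt (Re (B Y Y)) * op_norm (op_sub X Y) + (op_norm (op_sub X Y))^2"
proof -
  define D where "D = op_sub X Y"
  have DA: "D \<in> A" unfolding D_def using A_sub X Y by blast
  have XeqYD: "X = op_add Y D" unfolding D_def by (simp add: op_add_def op_sub_def)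
  define p where "p = Re (B Y Y)"
  define s where "s = Re (B D D)"
  define q where "q = Re (B Y D + B D Y)"
  have p0: "p \<ge> 0" and s0: "s \<ge> 0" using B_self Y DA p_def s_def by auto
  have "Re (B X X) = p + q + s" unfolding XeqYD p_def q_def s_def
    by (simp add: B_add1 B_add2 DA Y A_add)
  moreover have "q^2 \<le> 4 * p * s" unfolding q_def p_def s_def by (rule B_cs[OF Y DA])
  moreover have "s \<le> (op_norm D)^2" unfolding s_def by (rule norm2_le[OF DA])
  ultimately have le: "\<bar>Re (B X X) - p\<bar> \<le> \<bar>q\<bar> + (op_norm D)^2" using s0 by simp
  have "\<bar>q\<bar> \<le> 2 * sqrt p * sqrt s"
  proof -
    have "\<bar>q\<bar> = sqrt (q^2)" by simp
    also have "\<dots> \<le> sqrt (4 * p * s)" using \<open>q^2 \<le> 4 * p * s\<close> by (rule real_sqrt_le_mono)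
    also have "\<dots> = 2 * sqrt p * sqrt s" by (simp add: real_sqrt_mult)
    finally show ?thesis .
  qed
  also have "sqrt s \<le> op_norm D"
    using \<open>s \<le> (op_norm D)^2\<close> op_norm_nonneg[OF A_bdd[OF DA]] by (simp add: real_sqrt_le_iff real_le_lsqrt)
  hence "2 * sqrt p * sqrt s \<le> 2 * sqrt p * op_norm D" using p0 by (simp add: mult_left_mono)
  finally show ?thesis using le by (simp add: D_def p_def)
qed

end


lemma op_prod_Nil[simp]: "op_prod [] = op_id" by (simp add: op_prod_def)
lemma op_prod_Cons[simp]: "op_prod (x # xs) = x \<circ> op_prod xs" by (simp add: op_prod_def)

lemma op_prod_bdd: "(\<forall>x\<in>set xs. is_bdd_op x) \<Longrightarrow> is_bdd_op (op_prod xs)"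
  by (induction xs) (auto simp: bdd_op_id bdd_comp)

lemma op_prod_append: "(\<forall>x\<in>set ys. is_bdd_op x) \<Longrightarrow> op_prod (xs @ ys) = op_prod xs \<circ> op_prod ys"
proof (induction xs)
  case Nil thus ?case by (simp add: id_comp op_prod_bdd)
next
  case (Cons x xs) thus ?case by (simp add: o_assoc)
qed

fun altl :: "bool \<Rightarrow> nat \<Rightarrow> bool list" where
  "altl k 0 = []"
| "altl k (Suc n) = k # altl (\<not> k) n"

lemma altl_length[simp]: "length (altl k n) = n"
  by (induction n arbitrary: k) auto

lemma altl_nth: "j < n \<Longrightarrow> altl k n ! j = (if even j then k else \<not> k)"
proof (induction n arbitrary: k j)
  case 0 thus ?case by simp
next
  case (Suc n) thus ?case by (cases j) auto
qed

fun fw :: "'i op \<Rightarrow> 'i op \<Rightarrow> nat \<Rightarrow> 'i op" where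
  "fw a b 0 = op_id"
| "fw a b (Suc n) = a \<circ> b \<circ> fw a b n"

fun fv :: "'i op \<Rightarrow> 'i op \<Rightarrow> nat \<Rightarrow> 'i op" where
  "fv a b 0 = op_id"
| "fv a b (Suc n) = fv a b n \<circ> adj b \<circ> adj a"

fun wl :: "'i op \<Rightarrow> 'i op \<Rightarrow> nat \<Rightarrow> 'i op list" where
  "wl a b 0 = []"
| "wl a b (Suc n) = a # b # wl a b n"

fun vl :: "'i op \<Rightarrow> 'i op \<Rightarrow> nat \<Rightarrow> 'i op list" where
  "vl a b 0 = []"
| "vl a b (Suc n) = vl a b n @ [adj b, adj a]"

lemma wl_length[simp]: "length (wl a b n) = 2 * n" by (induction n) auto
lemma vl_length[simp]: "length (vl a b n) = 2 * n" by (induction n) auto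

lemma wl_prod: "op_prod (wl a b n) = fw a b n" by (induction n) auto

lemma vl_prod: "is_bdd_op a \<Longrightarrow> is_bdd_op b \<Longrightarrow> op_prod (vl a b n) = fv a b n"
  by (induction n) (simp_all add: op_prod_append adj_bdd comp_id o_assoc)

lemma fw_bdd: "is_bdd_op a \<Longrightarrow> is_bdd_op b \<Longrightarrow> is_bdd_op (fw a b n)"
  by (induction n) (auto simp: bdd_op_id bdd_comp)

lemma fv_bdd: "is_bdd_op a \<Longrightarrow> is_bdd_op b \<Longrightarrow> is_bdd_op (fv a b n)"
  by (induction n) (auto simp: bdd_op_id bdd_comp adj_bdd)

lemma adj_fw: "is_bdd_op a \<Longrightarrow> is_bdd_op b \<Longrightarrow> adj (fw a b n) = fv a b n"
  by (induction n) (simp_all add: adj_id adj_comp bdd_comp fw_bdd o_assoc)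

context twps begin

lemma star_alg_A: assumes a: "a \<in> A" shows "x \<in> star_alg a \<Longrightarrow> x \<in> A"
  by (induction rule: star_alg.induct) (blast intro: A_id A_adj A_add A_comp A_scale a)+

lemma fw_A: "a \<in> A \<Longrightarrow> b \<in> A \<Longrightarrow> fw a b n \<in> A"
  by (induction n) (auto intro: A_id A_comp)

lemma fv_A: "a \<in> A \<Longrightarrow> b \<in> A \<Longrightarrow> fv a b n \<in> A"
  by (induction n) (auto intro: A_id A_comp A_adj)

lemma mid:
  assumes P: "P \<in> A" and Q: "Q \<in> A" and X: "X \<in> A"
  shows "\<tau> (P \<circ> op_add X (op_scale g op_id) \<circ> Q) = \<tau> (P \<circ> X \<circ> Q) + g * \<tau> (P \<circ> Q)"
proof -
  have bP: "is_bdd_op P" and bQ: "is_bdd_op Q" and bX: "is_bdd_op X" using P Q X A_bdd by auto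
  have "op_add X (op_scale g op_id) \<circ> Q = op_add (X \<circ> Q) (op_scale g Q)"
    by (simp add: add_comp scale_comp id_comp bQ)
  hence "P \<circ> op_add X (op_scale g op_id) \<circ> Q = op_add (P \<circ> X \<circ> Q) (op_scale g (P \<circ> Q))"
    by (simp add: o_assoc[symmetric] comp_add comp_scale bP bQ bX bdd_comp bdd_op_scale)
  thus ?thesis using P Q X by (simp add: tau_add tau_scale A_comp A_scale)
qed

end

locale freepair = twps +
  fixes a b :: "'a op"
  assumes aA: "a \<in> A" and bA: "b \<in> A" and free: "star_free \<tau> a b"
    and ta: "\<tau> a = 0" and tb: "\<tau> b = 0"
begin

definition alg :: "bool \<Rightarrow> 'a op set" where
  "alg k = (if k then star_alg a else star_alg b)"

fun goodr :: "bool \<Rightarrow> 'a op list \<Rightarrow> bool" where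
  "goodr k [] = True"
| "goodr k (x # xs) = (x \<in> alg k \<and> \<tau> x = 0 \<and> goodr (\<not> k) xs)"

lemma goodr_nth: "goodr k xs \<Longrightarrow> j < length xs \<Longrightarrow> xs ! j \<in> alg (altl k (length xs) ! j) \<and> \<tau> (xs ! j) = 0"
proof (induction xs arbitrary: k j)
  case Nil thus ?case by simp
next
  case (Cons x xs) thus ?case by (cases j) auto
qed

lemma goodr_tau: assumes "goodr k xs" "xs \<noteq> []" shows "\<tau> (op_prod xs) = 0"
proof -
  have "\<forall>j<length xs. xs ! j \<in> (if altl k (length xs) ! j then star_alg a else star_alg b) \<and> \<tau> (xs ! j) = 0"
    using goodr_nth[OF assms(1)] by (simp add: alg_def)
  moreover have "\<forall>j. Suc j < length xs \<longrightarrow> altl k (length xs) ! j \<noteq> altl k (length xs) ! Suc j"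
    by (simp add: altl_nth)
  ultimately show ?thesis using free assms(2) unfolding star_free_def
    by (metis altl_length)
qed

lemma goodr_append: "goodr k (xs @ ys) \<longleftrightarrow> goodr k xs \<and> goodr (if even (length xs) then k else \<not> k) ys"
  by (induction xs arbitrary: k) auto

lemma tadj_a: "\<tau> (adj a) = 0" using tau_adj[OF aA] ta by simp
lemma tadj_b: "\<tau> (adj b) = 0" using tau_adj[OF bA] tb by simp

lemma goodr_wl: "goodr True (wl a b n)"
  by (induction n) (auto simp: alg_def ta tb star_alg.intros)

lemma goodr_vl: "goodr False (vl a b n)"
  by (induction n) (auto simp: alg_def tadj_a tadj_b star_alg.intros goodr_append)

definition \<alpha> where "\<alpha> = \<tau> (adj a \<circ> a)"
definition \<beta> where "\<beta> = \<tau> (adj b \<circ> b)"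
definition ca where "ca = op_add (adj a \<circ> a) (op_scale (- \<alpha>) op_id)"
definition cb where "cb = op_add (adj b \<circ> b) (op_scale (- \<beta>) op_id)"

lemma ca_alg: "ca \<in> star_alg a"
  unfolding ca_def by (intro star_alg.intros)
lemma cb_alg: "cb \<in> star_alg b"
  unfolding cb_def by (intro star_alg.intros)

lemma ca_A: "ca \<in> A" using star_alg_A[OF aA ca_alg] .
lemma cb_A: "cb \<in> A" using star_alg_A[OF bA cb_alg] .

lemma tau_ca: "\<tau> ca = 0"
  unfolding ca_def \<alpha>_def using aA by (simp add: tau_add tau_scale A_comp A_adj A_scale A_id tau_id)
lemma tau_cb: "\<tau> cb = 0"
  unfolding cb_def \<beta>_def using bA by (simp add: tau_add tau_scale A_comp A_adj A_scale A_id tau_id)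

lemma ca_eq: "adj a \<circ> a = op_add ca (op_scale \<alpha> op_id)"
  unfolding ca_def by (simp add: op_add_def op_scale_def fun_eq_iff)
lemma cb_eq: "adj b \<circ> b = op_add cb (op_scale \<beta> op_id)"
  unfolding cb_def by (simp add: op_add_def op_scale_def fun_eq_iff)

lemma bdd_a: "is_bdd_op a" and bdd_b: "is_bdd_op b" using aA bA A_bdd by auto

lemma tau_fw: "n > 0 \<Longrightarrow> \<tau> (fw a b n) = 0"
  using goodr_tau[OF goodr_wl, of n] by (simp add: wl_prod) (metis length_0_conv mult_is_0 not_gr0 wl_length zero_neq_numeral)

lemma tau_fv: "n > 0 \<Longrightarrow> \<tau> (fv a b n) = 0"
  using goodr_tau[OF goodr_vl, of n] by (simp add: vl_prod bdd_a bdd_b) (metis length_0_conv mult_is_0 not_gr0 vl_length zero_neq_numeral)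

lemma word3: "\<tau> (fv a b m \<circ> adj b \<circ> ca \<circ> b \<circ> fw a b n) = 0"
proof -
  have g: "goodr False (vl a b m @ [adj b, ca, b] @ wl a b n)"
    using goodr_vl goodr_wl by (simp add: goodr_append alg_def star_alg.intros ca_alg tadj_b tau_ca tb)
  have bl: "\<forall>x\<in>set ([adj b, ca, b] @ wl a b n). is_bdd_op x"
  proof -
    have "set (wl a b n) \<subseteq> {a, b}" by (induction n) auto
    thus ?thesis using bdd_a bdd_b adj_bdd ca_A A_bdd by auto
  qed
  have "op_prod (vl a b m @ [adj b, ca, b] @ wl a b n) = fv a b m \<circ> adj b \<circ> ca \<circ> b \<circ> fw a b n"
    by (subst op_prod_append[OF bl]) (simp add: vl_prod bdd_a bdd_b wl_prod o_assoc)
  thus ?thesis using goodr_tau[OF g] by simp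
qed

lemma word4: "\<tau> (fv a b m \<circ> cb \<circ> fw a b n) = 0"
proof -
  have g: "goodr False (vl a b m @ [cb] @ wl a b n)"
    using goodr_vl goodr_wl by (simp add: goodr_append alg_def cb_alg tau_cb)
  have bl: "\<forall>x\<in>set ([cb] @ wl a b n). is_bdd_op x"
  proof -
    have "set (wl a b n) \<subseteq> {a, b}" by (induction n) auto
    thus ?thesis using bdd_a bdd_b cb_A A_bdd by auto
  qed
  have "op_prod (vl a b m @ [cb] @ wl a b n) = fv a b m \<circ> cb \<circ> fw a b n"
    by (subst op_prod_append[OF bl]) (simp add: vl_prod bdd_a bdd_b wl_prod o_assoc)
  thus ?thesis using goodr_tau[OF g] by simp
qed

lemma G_rec: "\<tau> (fv a b (Suc m) \<circ> fw a b (Suc n)) = \<alpha> * \<beta> * \<tau> (fv a b m \<circ> fw a b n)"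
proof -
  have VA: "fv a b m \<in> A" and WA: "fw a b n \<in> A" using fv_A fw_A aA bA by auto
  have P1: "fv a b m \<circ> adj b \<in> A" using VA A_comp A_adj bA by blast
  have Q1: "b \<circ> fw a b n \<in> A" using WA A_comp bA by blast
  have e0: "fv a b (Suc m) \<circ> fw a b (Suc n) = (fv a b m \<circ> adj b) \<circ> (adj a \<circ> a) \<circ> (b \<circ> fw a b n)"
    by (simp only: fv.simps fw.simps o_assoc)
  have e1: "\<tau> ((fv a b m \<circ> adj b) \<circ> (adj a \<circ> a) \<circ> (b \<circ> fw a b n))
      = \<tau> ((fv a b m \<circ> adj b) \<circ> ca \<circ> (b \<circ> fw a b n)) + \<alpha> * \<tau> ((fv a b m \<circ> adj b) \<circ> (b \<circ> fw a b n))"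
    unfolding ca_eq by (rule mid[OF P1 Q1 ca_A])
  have e2: "(fv a b m \<circ> adj b) \<circ> ca \<circ> (b \<circ> fw a b n) = fv a b m \<circ> adj b \<circ> ca \<circ> b \<circ> fw a b n"
    by (simp only: o_assoc)
  have e3: "(fv a b m \<circ> adj b) \<circ> (b \<circ> fw a b n) = fv a b m \<circ> (adj b \<circ> b) \<circ> fw a b n"
    by (simp only: o_assoc)
  have e4: "\<tau> (fv a b m \<circ> (adj b \<circ> b) \<circ> fw a b n) = \<tau> (fv a b m \<circ> cb \<circ> fw a b n) + \<beta> * \<tau> (fv a b m \<circ> fw a b n)"
    unfolding cb_eq by (rule mid[OF VA WA cb_A])
  have "\<tau> (fv a b (Suc m) \<circ> fw a b (Suc n)) = 0 + \<alpha> * (0 + \<beta> * \<tau> (fv a b m \<circ> fw a b n))"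
    by (simp only: e0 e1 e2 e3 e4 word3 word4)
  thus ?thesis by (simp add: algebra_simps)
qed

lemma G_formula: "\<tau> (fv a b m \<circ> fw a b n) = (if m = n then (\<alpha> * \<beta>)^n else 0)"
proof (induction m arbitrary: n)
  case 0
  show ?case
  proof (cases n)
    case 0 thus ?thesis by (simp add: id_comp bdd_op_id tau_id)
  next
    case (Suc k)
    have h: "fv a b 0 \<circ> fw a b n = fw a b n" using id_comp[OF fw_bdd[OF bdd_a bdd_b]] by simp
    have n0: "n > 0" using Suc by simp
    show ?thesis unfolding h using tau_fw[OF n0] n0 by simp
  qed
next
  case (Suc m)
  note IH = Suc.IH
  show ?case
  proof (cases n)
    case 0
    have h: "fv a b (Suc m) \<circ> fw a b n = fv a b (Suc m)" using comp_id[OF fv_bdd[OF bdd_a bdd_b]] 0 by (simp only: fw.simps)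
    show ?thesis unfolding h using tau_fv[of "Suc m"] 0 by (simp del: fv.simps)
  next
    case (Suc k)
    note nk = this
    have "\<tau> (fv a b (Suc m) \<circ> fw a b n) = \<alpha> * \<beta> * \<tau> (fv a b m \<circ> fw a b k)"
      unfolding nk by (rule G_rec)
    also have "\<dots> = \<alpha> * \<beta> * (if m = k then (\<alpha> * \<beta>)^k else 0)" by (simp only: IH)
    also have "\<dots> = (if Suc m = n then (\<alpha> * \<beta>)^n else 0)" using nk by simp
    finally show ?thesis .
  qed
qed

end


fun Ssum :: "'i op \<Rightarrow> 'i op \<Rightarrow> nat \<Rightarrow> 'i op" where
  "Ssum a b 0 = op_zero"
| "Ssum a b (Suc N) = op_add (Ssum a b N) (fw a b N)"

context freepair begin

definition G where "G j k = \<tau> (fv a b j \<circ> fw a b k)"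

lemma G_form: "G j k = (if j = k then (\<alpha> * \<beta>)^k else 0)"
  unfolding G_def by (rule G_formula)

lemma S_A: "Ssum a b N \<in> A"
  by (induction N) (auto intro: A_zero A_add fw_A aA bA)

lemma BW: "B (fw a b j) (fw a b k) = G j k"
  unfolding B_def G_def by (simp add: adj_fw bdd_a bdd_b)

lemma B_zero1: "Y \<in> A \<Longrightarrow> B op_zero Y = 0"
  unfolding B_def by (simp add: adj_zero zero_comp tau_zero)

lemma B_zero2: "X \<in> A \<Longrightarrow> B X op_zero = 0"
  unfolding B_def by (simp add: comp_zero adj_bdd A_bdd tau_zero)

lemma BSW: "B (Ssum a b N) (fw a b k) = (\<Sum>j<N. G j k)"
proof (induction N)
  case 0 thus ?case using B_zero1 fw_A aA bA by simp
next
  case (Suc N) thus ?case using B_add1 S_A fw_A aA bA BW by simp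
qed

lemma BWS: "B (fw a b k) (Ssum a b N) = (\<Sum>j<N. G k j)"
proof (induction N)
  case 0 thus ?case using B_zero2 fw_A aA bA by simp
next
  case (Suc N) thus ?case using B_add2 S_A fw_A aA bA BW by simp
qed

lemma BSS: assumes r: "\<alpha> * \<beta> = 1" shows "B (Ssum a b N) (Ssum a b N) = of_nat N"
proof (induction N)
  case 0 thus ?case using B_zero1 A_zero by simp
next
  case (Suc N)
  have SA: "Ssum a b N \<in> A" and WA: "fw a b N \<in> A" using S_A fw_A aA bA by auto
  have "B (Ssum a b (Suc N)) (Ssum a b (Suc N))
     = B (Ssum a b N) (Ssum a b N) + B (Ssum a b N) (fw a b N) + (B (fw a b N) (Ssum a b N) + B (fw a b N) (fw a b N))"
    using SA WA by (simp add: B_add1 B_add2 A_add)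
  also have "B (Ssum a b N) (fw a b N) = 0" unfolding BSW G_form by simp
  also have "B (fw a b N) (Ssum a b N) = 0" unfolding BWS G_form by simp
  also have "B (fw a b N) (fw a b N) = 1" unfolding BW G_form r by simp
  finally show ?case using Suc by simp
qed

lemma eta_eq: "op_sub op_id (a \<circ> b) \<circ> Ssum a b N = op_sub op_id (fw a b N)"
proof (induction N)
  case 0
  have "is_bdd_op (op_sub op_id (a \<circ> b))" using bdd_a bdd_b by (intro bdd_op_sub bdd_op_id bdd_comp)
  hence "op_sub op_id (a \<circ> b) \<circ> Ssum a b 0 = op_zero" by (simp only: Ssum.simps comp_zero)
  also have "\<dots> = op_sub op_id (fw a b 0)" by (simp add: op_zero_def op_sub_def fun_eq_iff)
  finally show ?case .
next
  case (Suc N)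
  have b1: "is_bdd_op (op_sub op_id (a \<circ> b))" using bdd_a bdd_b by (intro bdd_op_sub bdd_op_id bdd_comp)
  have b2: "is_bdd_op (Ssum a b N)" using S_A A_bdd by blast
  have b3: "is_bdd_op (fw a b N)" using fw_bdd bdd_a bdd_b by blast
  have idw: "op_id (fw a b N x) = fw a b N x" for x using bdd_l2[OF b3] by (simp add: op_id_def)
  have "op_sub op_id (a \<circ> b) \<circ> Ssum a b (Suc N)
      = op_add (op_sub op_id (a \<circ> b) \<circ> Ssum a b N) (op_sub op_id (a \<circ> b) \<circ> fw a b N)"
    by (simp only: Ssum.simps comp_add[OF b1 b2 b3])
  also have "\<dots> = op_sub op_id (fw a b (Suc N))"
    unfolding Suc by (simp add: op_add_def op_sub_def fun_eq_iff idw)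
  finally show ?case .
qed

lemma Beta: assumes r: "\<alpha> * \<beta> = 1" and N: "N > 0"
  shows "B (op_sub op_id (fw a b N)) (op_sub op_id (fw a b N)) = 2"
proof -
  have WA: "fw a b N \<in> A" using fw_A aA bA by auto
  have "B (op_sub op_id (fw a b N)) (op_sub op_id (fw a b N))
    = B (fw a b 0) (fw a b 0) - B (fw a b 0) (fw a b N) - (B (fw a b N) (fw a b 0) - B (fw a b N) (fw a b N))"
    using WA A_id by (simp add: B_sub1 B_sub2 A_sub)
  also have "\<dots> = 2" unfolding BW G_form r using N by simp
  finally show ?thesis .
qed

lemma not_one: assumes inv: "invertible_in A (op_sub op_id (a \<circ> b))" shows "\<alpha> * \<beta> \<noteq> 1"
proof
  assume r: "\<alpha> * \<beta> = 1"
  obtain c where cA: "c \<in> A" and c2: "c \<circ> op_sub op_id (a \<circ> b) = op_id"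
    using inv unfolding invertible_in_def by blast
  define N where "N = Suc (nat \<lceil>2 * (op_norm c)^2\<rceil>)"
  define \<eta> where "\<eta> = op_sub op_id (a \<circ> b) \<circ> Ssum a b N"
  have eA: "\<eta> \<in> A" unfolding \<eta>_def using A_sub A_id A_comp aA bA S_A by blast
  have ce: "c \<circ> \<eta> = Ssum a b N"
  proof -
    have "c \<circ> \<eta> = (c \<circ> op_sub op_id (a \<circ> b)) \<circ> Ssum a b N" unfolding \<eta>_def by (simp add: o_assoc)
    also have "\<dots> = Ssum a b N" unfolding c2 using S_A A_bdd id_comp by blast
    finally show ?thesis .
  qed
  have "Re (B (c \<circ> \<eta>) (c \<circ> \<eta>)) \<le> (op_norm c)^2 * Re (B \<eta> \<eta>)" by (rule key_ineq[OF cA eA])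
  moreover have e1: "B (c \<circ> \<eta>) (c \<circ> \<eta>) = of_nat N" by (simp only: ce BSS[OF r])
  moreover have e2: "B \<eta> \<eta> = 2" unfolding \<eta>_def eta_eq by (rule Beta[OF r]) (simp add: N_def)
  ultimately have "real N \<le> (op_norm c)^2 * 2" by simp
  moreover have "real N > 2 * (op_norm c)^2" unfolding N_def by linarith
  ultimately show False by simp
qed

lemma not_one_norm: assumes inv: "invertible_in A (op_sub op_id (a \<circ> b))"
  shows "norm2 \<tau> a * norm2 \<tau> b \<noteq> 1"
proof
  assume h: "norm2 \<tau> a * norm2 \<tau> b = 1"
  have ia: "Im \<alpha> = 0" and ra: "Re \<alpha> \<ge> 0" using B_self[OF aA] unfolding B_def \<alpha>_def by auto
  have ib: "Im \<beta> = 0" and rb: "Re \<beta> \<ge> 0" using B_self[OF bA] unfolding B_def \<beta>_def by auto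
  have "sqrt (Re \<alpha> * Re \<beta>) = 1" using h unfolding norm2_def \<alpha>_def[symmetric] \<beta>_def[symmetric]
    by (simp add: real_sqrt_mult)
  hence "Re \<alpha> * Re \<beta> = 1" using ra rb by simp
  hence "\<alpha> * \<beta> = 1" using ia ib by (simp add: complex_eq_iff)
  thus False using not_one[OF inv] by simp
qed

end


context twps begin

lemma f_cont:
  fixes u :: "'x::topological_space \<Rightarrow> 'i op"
  assumes uA: "\<forall>x. u x \<in> A" and uc: "op_norm_continuous u"
  shows "continuous_on UNIV (\<lambda>x. Re (B (u x) (u x)))"
  unfolding continuous_on_def
proof (intro ballI)
  fix x0 :: 'x
  define f where "f x = Re (B (u x) (u x))" for x
  define p where "p = f x0"
  have p0: "p \<ge> 0" unfolding p_def f_def using B_self uA by blast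
  have "(f \<longlongrightarrow> f x0) (nhds x0)"
  proof (rule tendstoI)
    fix e :: real assume e: "e > 0"
    define d where "d = min 1 (e / (2 * sqrt p + 2))"
    have d0: "d > 0" unfolding d_def using e p0 by (simp add: add_nonneg_pos)
    have "\<forall>\<^sub>F x in nhds x0. op_norm (op_sub (u x) (u x0)) < d"
      using uc d0 unfolding op_norm_continuous_def by blast
    thus "\<forall>\<^sub>F x in nhds x0. dist (f x) (f x0) < e"
    proof (rule eventually_mono)
      fix x assume h: "op_norm (op_sub (u x) (u x0)) < d"
      define n where "n = op_norm (op_sub (u x) (u x0))"
      have n0: "n \<ge> 0" unfolding n_def using op_norm_nonneg bdd_op_sub A_bdd uA by blast
      have nd: "n < d" using h n_def by simp
      have "\<bar>f x - f x0\<bar> \<le> 2 * sqrt p * n + n^2"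
        unfolding f_def p_def n_def using B_cont_bound uA by (simp add: f_def)
      also have "\<dots> \<le> 2 * sqrt p * d + d * d"
        using nd n0 p0 by (intro add_mono mult_left_mono) (auto simp: power2_eq_square intro: mult_mono)
      also have "\<dots> \<le> 2 * sqrt p * d + d"
      proof -
        have "d \<le> 1" by (simp add: d_def)
        hence "d * d \<le> d" using d0 by (intro mult_left_le) auto
        thus ?thesis by simp
      qed
      also have "\<dots> = (2 * sqrt p + 1) * d" by (simp add: algebra_simps)
      also have "\<dots> < e"
      proof -
        have "(2 * sqrt p + 1) * d \<le> (2 * sqrt p + 1) * (e / (2 * sqrt p + 2))"
          using p0 by (intro mult_left_mono) (auto simp: d_def)
        also have "\<dots> = ((2 * sqrt p + 1) * e) / (2 * sqrt p + 2)" by simp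
        also have "\<dots> < e"
        proof -
          have q: "0 < 2 * sqrt p + 2" using p0 by (simp add: add_nonneg_pos)
          have "(2 * sqrt p + 1) * e < e * (2 * sqrt p + 2)" using e by (simp add: algebra_simps)
          thus ?thesis using q by (simp add: pos_divide_less_eq)
        qed
        finally show ?thesis .
      qed
      finally show "dist (f x) (f x0) < e" by (simp add: dist_real_def)
    qed
  qed
  hence "(f \<longlongrightarrow> f x0) (at x0)" using tendsto_at_iff_tendsto_nhds[of f x0] by blast
  thus "((\<lambda>x. Re (B (u x) (u x))) \<longlongrightarrow> Re (B (u x0) (u x0))) (at x0 within UNIV)"
    unfolding f_def[abs_def] by simp
qed

end

theorem corollary3p2:
  fixes A :: "'i op set" and \<tau> :: "'i op \<Rightarrow> complex"
    and u1 u2 :: "'x::topological_space \<Rightarrow> 'i op"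
  assumes "tracial_W_prob_space A \<tau>"
    and "\<forall>x. u1 x \<in> A" and "\<forall>x. u2 x \<in> A"
    and "op_norm_continuous u1" and "op_norm_continuous u2"
    and "\<forall>x. star_free \<tau> (u1 x) (u2 x)"
    and "\<forall>x. \<tau> (u1 x) = 0 \<and> \<tau> (u2 x) = 0"
    and "\<forall>x. invertible_in A (op_sub op_id (u1 x \<circ> u2 x))"
  shows "let Y = {x. norm2 \<tau> (u1 x) * norm2 \<tau> (u2 x) < 1} in
           open Y \<and> closed Y \<and> (connected (UNIV :: 'x set) \<longrightarrow> Y = UNIV \<or> Y = {})"
proof -
  interpret twps A \<tau> by unfold_locales (rule assms(1))
  define g where "g x = norm2 \<tau> (u1 x) * norm2 \<tau> (u2 x)" for x
  have ne: "g x \<noteq> 1" for x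
  proof -
    interpret F: freepair A \<tau> "u1 x" "u2 x"
      by unfold_locales (use assms in auto)
    show ?thesis unfolding g_def by (rule F.not_one_norm) (use assms in auto)
  qed
  have n1: "norm2 \<tau> (u1 x) = sqrt (Re (B (u1 x) (u1 x)))" for x by (simp add: norm2_def B_def)
  have n2: "norm2 \<tau> (u2 x) = sqrt (Re (B (u2 x) (u2 x)))" for x by (simp add: norm2_def B_def)
  have gc: "continuous_on UNIV g"
    unfolding g_def n1 n2
    by (intro continuous_on_mult continuous_on_real_sqrt f_cont assms)
  have o1: "open {x. g x < 1}" by (rule open_Collect_less[OF gc continuous_on_const])
  have o2: "open {x. 1 < g x}" by (rule open_Collect_less[OF continuous_on_const gc])
  have eq: "{x. g x < 1} = {x. g x \<le> 1}" by (rule Collect_cong) (use ne in \<open>auto simp: le_less\<close>)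
  have cl: "closed {x. g x < 1}" unfolding eq by (rule closed_Collect_le[OF gc continuous_on_const])
  have conn: "{x. g x < 1} = UNIV \<or> {x. g x < 1} = {}" if c: "connected (UNIV :: 'x set)"
  proof -
    have "{x. g x < 1} \<inter> UNIV = {} \<or> {x. 1 < g x} \<inter> UNIV = {}"
      by (rule connectedD[OF c o1 o2]) (use ne in \<open>auto simp: neq_iff\<close>)
    thus ?thesis using ne by (auto simp: neq_iff)
  qed
  show ?thesis unfolding Let_def g_def[symmetric] using o1 cl conn by blast
qed


end
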